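(* Let $d\ge2$, $N\ge1$, and let $\Gamma$ be the graph obtained from the $d$-dimensional lattice $\mathbb L^d$ (vertex set $\mathbb Z^d$, edges $(m,m+a_s)$, $m\in\mathbb Z^d$, $s=1,\dots,d$, $a_s$ the standard basis) by inserting $N$ new vertices on every edge (subdividing each edge into a path of $N+1$ edges), with $\mathbb Z^d$ acting by translations. Then the fundamental graph $\Gamma_*$ has $\nu=dN+1$ vertices, and the spectrum of the normalized Laplacian $\Delta$ on $\Gamma$ is $\sigma(\Delta)=\sigma_{ac}(\Delta)\cup\sigma_{fb}(\Delta)$, where $\sigma_{ac}(\Delta)=[0,2]$ and the set of eigenvalues of infinite multiplicity is $$\sigma_{fb}(\Delta)=\Big\{1+\cos\frac{\pi n}{N+1}:\ n=1,\dots,N\Big\}.$$ Each of these degenerate bands has multiplicity $d-1$ and is embedded in the absolutely continuous spectrum.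
   Context: Normalized Laplacian on a graph with vertex set $V$: each undirected edge gives two oriented edges, $\mathcal A$ is the set of oriented edges, $\varkappa_v$ the number of oriented edges starting at $v$, and $(\Delta f)(v)=f(v)-\sum_{(v,u)\in\mathcal A}\frac{f(u)}{\sqrt{\varkappa_v\varkappa_u}}$ on $\ell^2(V)$. For a $\mathbb Z^d$-periodic graph with finite quotient $\Gamma_*=(V_*,\mathcal E_* )$, fix a set $V_0$ of representatives of the vertex orbits forming the vertex set of a subtree, write $v=v_0+[v]$, define edge indices $\tau(u,v)=[v]-[u]$ on $\mathcal A_*=\mathcal A/\mathbb Z^d$, and for $\vartheta\in\mathbb T^d=\mathbb R^d/(2\pi\mathbb Z)^d$ set $(\Delta(\vartheta)f)(v)=f(v)-\sum_{\mathbf e=(v,u)\in\mathcal A_*}\frac{e^{i\langle\tau(\mathbf e),\vartheta\rangle}}{\sqrt{\varkappa_v\varkappa_u}}f(u)$ on $\ell^2(V_* )$; $\Delta$ is unitarily equivalent to the direct integral of $\Delta(\vartheta)$, and $\sigma(\Delta)$ is the union of the bands $\lambda^0_n(\mathbb T^d)$ where $\lambda^0_n(\vartheta)$ are the ordered eigenvalues of $\Delta(\vartheta)$. A degenerate band $\{\lambda_*\}$ is an eigenvalue of $\Delta$ of infinite multiplicity; its multiplicity is the multiplicity of $\lambda_*$ as an eigenvalue of $\Delta(\vartheta)$ for a.e. $\vartheta$. $\sigma_{ac}(\Delta)$ denotes the absolutely continuous spectrum (union of nondegenerate bands), $\sigma_{fb}(\Delta)$ the set of eigenvalues of infinite multiplicity.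 *)

theory Defs
  imports "HOL-Analysis.Analysis"
begin

text \<open>Vertices of a Z^d-periodic graph are pairs (m, b): m in Z^d is the lattice
 coordinate [v] and b labels the vertex orbit; the representatives V_0 are the vertices
 (0, b), b in Vs (the fundamental vertex set).  adj is the (symmetric, translation
 invariant) adjacency relation of the periodic graph.  Oriented edges of the quotient
 starting at b correspond to neighbours u of (0,b) in the periodic graph, and the edge
 index is tau = [u] - [(0,b)] = fst u.\<close>

definition kappa :: "('v \<Rightarrow> 'v \<Rightarrow> bool) \<Rightarrow> 'v \<Rightarrow> nat" where
  "kappa adj v = card {u. adj v u}"

definition fiber_op ::
  "((int^'d) \<times> 'b \<Rightarrow> (int^'d) \<times> 'b \<Rightarrow> bool) \<Rightarrow> real^'d \<Rightarrow> ('b \<Rightarrow> complex) \<Rightarrow> 'b \<Rightarrow> complex" where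
  "fiber_op adj \<theta> f b = f b -
     (\<Sum>u\<in>{u. adj (0, b) u}.
        cis (\<Sum>i\<in>UNIV. real_of_int (fst u $ i) * \<theta> $ i)
          / complex_of_real (sqrt (real (kappa adj (0, b)) * real (kappa adj u))) * f (snd u))"

definition is_eig ::
  "((int^'d) \<times> 'b \<Rightarrow> (int^'d) \<times> 'b \<Rightarrow> bool) \<Rightarrow> 'b set \<Rightarrow> real^'d \<Rightarrow> real \<Rightarrow> bool" where
  "is_eig adj Vs \<theta> lam \<longleftrightarrow>
     (\<exists>f. (\<exists>b\<in>Vs. f b \<noteq> 0) \<and> (\<forall>b\<in>Vs. fiber_op adj \<theta> f b = complex_of_real lam * f b))"

text \<open>Multiplicity of lam as eigenvalue of the fiber operator: the (complex) dimension
 of its eigenspace in l^2(Vs), i.e. the maximal number of linearly independent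
 eigenfunctions (the fiber operator is self-adjoint, so this is also the algebraic
 multiplicity).\<close>
definition eigmult ::
  "((int^'d) \<times> 'b \<Rightarrow> (int^'d) \<times> 'b \<Rightarrow> bool) \<Rightarrow> 'b set \<Rightarrow> real^'d \<Rightarrow> real \<Rightarrow> nat" where
  "eigmult adj Vs \<theta> lam = (GREATEST n. \<exists>fs :: nat \<Rightarrow> 'b \<Rightarrow> complex.
       (\<forall>j<n. \<forall>b\<in>Vs. fiber_op adj \<theta> (fs j) b = complex_of_real lam * fs j b) \<and>
       (\<forall>c :: nat \<Rightarrow> complex. (\<forall>b\<in>Vs. (\<Sum>j<n. c j * fs j b) = 0) \<longrightarrow> (\<forall>j<n. c j = 0)))"

definition eigcount ::
  "((int^'d) \<times> 'b \<Rightarrow> (int^'d) \<times> 'b \<Rightarrow> bool) \<Rightarrow> 'b set \<Rightarrow> real^'d \<Rightarrow> real \<Rightarrow> nat" where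
  "eigcount adj Vs \<theta> lam = (\<Sum>mu\<in>{mu. mu \<le> lam \<and> is_eig adj Vs \<theta> mu}. eigmult adj Vs \<theta> mu)"

text \<open>Band functions: the n-th eigenvalue (n = 1..card Vs) in increasing order, counted
 with multiplicity.\<close>
definition band ::
  "((int^'d) \<times> 'b \<Rightarrow> (int^'d) \<times> 'b \<Rightarrow> bool) \<Rightarrow> 'b set \<Rightarrow> nat \<Rightarrow> real^'d \<Rightarrow> real" where
  "band adj Vs n \<theta> = Inf {lam. n \<le> eigcount adj Vs \<theta> lam}"

definition degenerate_band ::
  "((int^'d) \<times> 'b \<Rightarrow> (int^'d) \<times> 'b \<Rightarrow> bool) \<Rightarrow> 'b set \<Rightarrow> nat \<Rightarrow> bool" where
  "degenerate_band adj Vs n \<longleftrightarrow> (\<exists>lam. \<forall>\<theta>. band adj Vs n \<theta> = lam)"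

text \<open>Spectrum = union of the bands; absolutely continuous spectrum = union of the
 nondegenerate bands; flat-band spectrum = values of the degenerate bands
 (eigenvalues of infinite multiplicity).\<close>
definition spec ::
  "((int^'d) \<times> 'b \<Rightarrow> (int^'d) \<times> 'b \<Rightarrow> bool) \<Rightarrow> 'b set \<Rightarrow> real set" where
  "spec adj Vs = (\<Union>n\<in>{1..card Vs}. range (band adj Vs n))"

definition spec_ac ::
  "((int^'d) \<times> 'b \<Rightarrow> (int^'d) \<times> 'b \<Rightarrow> bool) \<Rightarrow> 'b set \<Rightarrow> real set" where
  "spec_ac adj Vs = (\<Union>n\<in>{n\<in>{1..card Vs}. \<not> degenerate_band adj Vs n}. range (band adj Vs n))"

definition spec_fb ::
  "((int^'d) \<times> 'b \<Rightarrow> (int^'d) \<times> 'b \<Rightarrow> bool) \<Rightarrow> 'b set \<Rightarrow> real set" where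
  "spec_fb adj Vs = {lam. \<exists>n\<in>{1..card Vs}. \<forall>\<theta>. band adj Vs n \<theta> = lam}"

text \<open>Vertex (m, None) is the lattice point m; vertex (m, Some (s, k)), 1 \<le> k \<le> N,
 is the k-th inserted vertex on the edge (m, m + a_s).\<close>
type_synonym ('d) sv = "(int^'d) \<times> ('d \<times> nat) option"

definition fund_verts :: "nat \<Rightarrow> ('d \<times> nat) option set" where
  "fund_verts N = insert None {Some (s, k) | s k. 1 \<le> k \<and> k \<le> N}"

definition sub_edge :: "nat \<Rightarrow> ('d::finite) sv \<Rightarrow> 'd sv \<Rightarrow> bool" where
  "sub_edge N v u \<longleftrightarrow>
     (\<exists>m s. v = (m, None) \<and> u = (m, Some (s, 1))) \<or>
     (\<exists>m s k. 1 \<le> k \<and> k + 1 \<le> N \<and> v = (m, Some (s, k)) \<and> u = (m, Some (s, k + 1))) \<or>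
     (\<exists>m s. v = (m, Some (s, N)) \<and> u = (m + axis s 1, None))"

definition sub_adj :: "nat \<Rightarrow> ('d::finite) sv \<Rightarrow> 'd sv \<Rightarrow> bool" where
  "sub_adj N v u \<longleftrightarrow> sub_edge N v u \<or> sub_edge N u v"

end

theory Submission
  imports Defs "HOL-Library.Function_Algebras"
begin

lemma nbrs_None:
  assumes "N \<ge> 1"
  shows "{u. sub_adj N ((m::int^'d::finite), None) u} =
     (\<lambda>s. (m, Some (s, 1))) ` UNIV \<union> (\<lambda>s. (m - axis s 1, Some (s, N))) ` UNIV"
  using assms unfolding sub_adj_def sub_edge_def
  by (auto simp: algebra_simps) (metis diff_add_cancel)

lemma nbrs_Some:
  assumes "1 \<le> k" "k \<le> N"
  shows "{u. sub_adj N ((m::int^'d::finite), Some (s, k)) u} =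
     {(if k = 1 then (m, None) else (m, Some (s, k - 1))),
      (if k = N then (m + axis s 1, None) else (m, Some (s, k + 1)))}"
  using assms unfolding sub_adj_def sub_edge_def
  by (auto split: if_splits)

lemma axis_ne0: "axis s (1::int) \<noteq> 0"
  by (metis axis_nth zero_index zero_neq_one)

lemma kappa_None:
  assumes "N \<ge> 1"
  shows "kappa (sub_adj N) ((m::int^'d::finite), None) = 2 * CARD('d)"
proof -
  have d: "(\<lambda>s. (m, Some (s, 1))) ` UNIV \<inter> (\<lambda>s. (m - axis s 1, Some (s, N))) ` (UNIV::'d set) = {}"
    using axis_ne0 by auto
  have i1: "inj (\<lambda>s::'d. (m, Some (s, 1::nat)))" by (auto simp: inj_def)
  have i2: "inj (\<lambda>s::'d. (m - axis s 1, Some (s, N)))" by (auto simp: inj_def)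
  have c1: "card (range (\<lambda>s::'d. (m, Some (s, 1::nat)))) = CARD('d)" using card_image[OF i1] by simp
  have c2: "card (range (\<lambda>s::'d. (m - axis s 1, Some (s, N)))) = CARD('d)" using card_image[OF i2] by simp
  show ?thesis unfolding kappa_def nbrs_None[OF assms]
    using d c1 c2 by (simp add: card_Un_disjoint)
qed

lemma kappa_Some:
  assumes "1 \<le> k" "k \<le> N"
  shows "kappa (sub_adj N) ((m::int^'d::finite), Some (s, k)) = 2"
  unfolding kappa_def nbrs_Some[OF assms] using axis_ne0[of s]
  by (auto simp: card_insert_if)

lemma sum_axis: "(\<Sum>i\<in>UNIV. real_of_int (axis s 1 $ i) * (\<theta>::real^'d::finite) $ i) = \<theta> $ s"
proof -
  have "\<And>i. real_of_int (axis s 1 $ i) * \<theta> $ i = (if i = s then \<theta> $ s else 0)"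
    by (simp add: axis_def)
  then show ?thesis by simp
qed


lemma sqrt4d: "sqrt (real (2 * n) * 2) = 2 * sqrt (real n)"
proof -
  have "real (2 * n) * 2 = 2^2 * real n" by simp
  then show ?thesis by (simp add: real_sqrt_mult)
qed

lemma sqrt4d': "sqrt (2 * real (2 * n)) = 2 * sqrt (real n)"
  using sqrt4d[of n] by (simp add: mult.commute)

lemma fiber_None:
  fixes \<theta> :: "real^'d::finite" and f :: "('d \<times> nat) option \<Rightarrow> complex"
  assumes "N \<ge> 1"
  shows "fiber_op (sub_adj N) \<theta> f None = f None -
     (\<Sum>s\<in>UNIV. f (Some (s,1)) + cis (- (\<theta>$s)) * f (Some (s,N))) / complex_of_real (2 * sqrt (real CARD('d)))"
proof -
  let ?K = "complex_of_real (2 * sqrt (real CARD('d)))"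
  let ?T = "\<lambda>u::'d sv. cis (\<Sum>i\<in>UNIV. real_of_int (fst u $ i) * \<theta> $ i)
          / complex_of_real (sqrt (real (kappa (sub_adj N) (0::int^'d, None)) * real (kappa (sub_adj N) u))) * f (snd u)"
  have d: "(\<lambda>s. (0::int^'d, Some (s, 1::nat))) ` UNIV \<inter> (\<lambda>s. (0 - axis s 1, Some (s, N))) ` (UNIV::'d set) = {}"
    using axis_ne0 by (auto simp: right_minus_eq)
  have i1: "inj (\<lambda>s::'d. (0::int^'d, Some (s, 1::nat)))" by (auto simp: inj_def)
  have i2: "inj (\<lambda>s::'d. (0 - axis s 1::int^'d, Some (s, N)))" by (auto simp: inj_def)
  have k0: "kappa (sub_adj N) (0::int^'d, None) = 2 * CARD('d)" using kappa_None[OF assms] .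
  have t1: "?T (0, Some (s, 1)) = f (Some (s,1)) / ?K" for s
    using kappa_Some[of 1 N 0 s] assms k0 by (simp add: sqrt4d real_sqrt_mult)
  have t2: "?T (0 - axis s 1, Some (s, N)) = cis (- (\<theta>$s)) * f (Some (s,N)) / ?K" for s
  proof -
    have "(\<Sum>i\<in>UNIV. real_of_int ((0 - axis s 1) $ i) * \<theta> $ i) = - (\<theta> $ s)"
      using sum_axis[of s \<theta>] by (simp add: sum_negf)
    then show ?thesis
      using kappa_Some[of N N "0 - axis s 1" s] assms k0 by (simp add: sqrt4d real_sqrt_mult)
  qed
  have "fiber_op (sub_adj N) \<theta> f None = f None - sum ?T ({u. sub_adj N (0, None) u})"
    unfolding fiber_op_def by simp
  also have "sum ?T ({u. sub_adj N (0, None) u}) =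
     sum ?T ((\<lambda>s. (0, Some (s, 1))) ` UNIV) + sum ?T ((\<lambda>s. (0 - axis s 1, Some (s, N))) ` UNIV)"
    unfolding nbrs_None[OF assms] by (rule sum.union_disjoint) (use d in auto)
  also have "\<dots> = (\<Sum>s\<in>UNIV. f (Some (s,1)) / ?K) + (\<Sum>s\<in>UNIV. cis (- (\<theta>$s)) * f (Some (s,N)) / ?K)"
    unfolding sum.reindex[OF i1] sum.reindex[OF i2] comp_def t1 t2 by (rule refl)
  also have "\<dots> = (\<Sum>s\<in>UNIV. f (Some (s,1)) + cis (- (\<theta>$s)) * f (Some (s,N))) / ?K"
    by (simp add: sum.distrib sum_divide_distrib add_divide_distrib)
  finally show ?thesis .
qed

lemma fiber_Some:
  fixes \<theta> :: "real^'d::finite" and f :: "('d \<times> nat) option \<Rightarrow> complex"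
  assumes "1 \<le> k" "k \<le> N"
  shows "fiber_op (sub_adj N) \<theta> f (Some (s,k)) = f (Some (s,k)) -
     ((if k = 1 then f None / complex_of_real (2 * sqrt (real CARD('d))) else f (Some (s, k - 1)) / 2)
    + (if k = N then cis (\<theta>$s) * f None / complex_of_real (2 * sqrt (real CARD('d))) else f (Some (s, k + 1)) / 2))"
proof -
  let ?K = "complex_of_real (2 * sqrt (real CARD('d)))"
  let ?T = "\<lambda>u::'d sv. cis (\<Sum>i\<in>UNIV. real_of_int (fst u $ i) * \<theta> $ i)
          / complex_of_real (sqrt (real (kappa (sub_adj N) (0, Some (s,k))) * real (kappa (sub_adj N) u))) * f (snd u)"
  let ?p = "(if k = 1 then (0::int^'d, None) else (0, Some (s, k - 1)))"
  let ?q = "(if k = N then (0 + axis s 1::int^'d, None) else (0, Some (s, k + 1)))"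
  have k0: "kappa (sub_adj N) (0::int^'d, Some (s,k)) = 2" using kappa_Some[OF assms] .
  have pq: "?p \<noteq> ?q" using axis_ne0[of s] by auto
  have tp: "?T ?p = (if k = 1 then f None / ?K else f (Some (s, k - 1)) / 2)"
  proof (cases "k = 1")
    case True
    then show ?thesis using kappa_None[of N "0::int^'d"] assms k0 by (simp add: sqrt4d' real_sqrt_mult)
  next
    case False
    then show ?thesis using kappa_Some[of "k-1" N 0 s] assms k0 by simp
  qed
  have tq: "?T ?q = (if k = N then cis (\<theta>$s) * f None / ?K else f (Some (s, k + 1)) / 2)"
  proof (cases "k = N")
    case True
    then show ?thesis using kappa_None[of N "0 + axis s 1::int^'d"] assms k0 sum_axis[of s \<theta>] by (simp add: sqrt4d' real_sqrt_mult)
  next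
    case False
    then show ?thesis using kappa_Some[of "k+1" N 0 s] assms k0 by simp
  qed
  have "fiber_op (sub_adj N) \<theta> f (Some (s,k)) = f (Some (s,k)) - sum ?T ({u. sub_adj N (0, Some (s,k)) u})"
    unfolding fiber_op_def by simp
  also have "sum ?T ({u. sub_adj N (0, Some (s,k)) u}) = ?T ?p + ?T ?q"
    unfolding nbrs_Some[OF assms] using pq by simp
  finally show ?thesis using tp tq by simp
qed

lemma sum_fun_apply: "(\<Sum>v\<in>S. g v) x = (\<Sum>v\<in>S. (g v) x)" for g :: "'c \<Rightarrow> 'a \<Rightarrow> 'b::comm_monoid_add"
  by (induct S rule: infinite_finite_induct) (auto simp: plus_fun_def zero_fun_def)

definition fscale :: "complex \<Rightarrow> ('a \<Rightarrow> complex) \<Rightarrow> 'a \<Rightarrow> complex" where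
  "fscale c f = (\<lambda>x. c * f x)"

interpretation fvs: vector_space "fscale :: complex \<Rightarrow> ('a \<Rightarrow> complex) \<Rightarrow> 'a \<Rightarrow> complex"
  by unfold_locales (auto simp: fscale_def plus_fun_def algebra_simps)

definition indep_on :: "'b set \<Rightarrow> nat \<Rightarrow> (nat \<Rightarrow> 'b \<Rightarrow> complex) \<Rightarrow> bool" where
  "indep_on V n fs \<longleftrightarrow> (\<forall>c. (\<forall>b\<in>V. (\<Sum>j<n. c j * fs j b) = 0) \<longrightarrow> (\<forall>j<n. c j = 0))"

definition restr :: "'b set \<Rightarrow> ('b \<Rightarrow> complex) \<Rightarrow> 'b \<Rightarrow> complex" where
  "restr V f = (\<lambda>b. if b \<in> V then f b else 0)"

definition delta :: "'b \<Rightarrow> 'b \<Rightarrow> complex" where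
  "delta a = (\<lambda>b. if b = a then 1 else 0)"

lemma restr_in_span:
  assumes "finite V"
  shows "restr V f \<in> fvs.span (delta ` V)"
proof -
  have "restr V f = (\<Sum>a\<in>V. fscale (f a) (delta a))"
    using assms by (auto simp: restr_def sum_fun_apply fscale_def delta_def fun_eq_iff if_distrib cong: if_cong)
  also have "\<dots> \<in> fvs.span (delta ` V)"
    by (intro fvs.span_sum fvs.span_scale fvs.span_base) auto
  finally show ?thesis .
qed

lemma indep_on_nonzero:
  assumes "indep_on V n fs" "j < n"
  shows "\<exists>b\<in>V. fs j b \<noteq> 0"
proof (rule ccontr)
  assume "\<not> ?thesis"
  moreover have "(\<Sum>k<n. (if k = j then 1 else 0) * fs k b) = (\<Sum>k<n. if k = j then fs j b else 0)" for b
    by (rule sum.cong) auto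
  ultimately have "\<forall>b\<in>V. (\<Sum>k<n. (if k = j then 1 else 0) * fs k b) = 0"
    using assms(2) by auto
  moreover have "(\<forall>b\<in>V. (\<Sum>k<n. (\<lambda>k. if k = j then 1 else 0) k * fs k b) = 0) \<longrightarrow> (\<forall>k<n. (\<lambda>k. if k = j then 1 else (0::complex)) k = 0)"
    using assms(1) unfolding indep_on_def by (rule spec)
  ultimately show False using assms(2) by auto
qed

lemma indep_on_inj:
  assumes "indep_on V n fs"
  shows "inj_on (\<lambda>j. restr V (fs j)) {..<n}"
proof (rule inj_onI, rule ccontr)
  fix i j assume ij: "i \<in> {..<n}" "j \<in> {..<n}" "restr V (fs i) = restr V (fs j)" "i \<noteq> j"
  let ?c = "\<lambda>k. if k = i then 1 else if k = j then -1 else (0::complex)"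
  have "\<forall>b\<in>V. (\<Sum>k<n. ?c k * fs k b) = 0"
  proof
    fix b assume b: "b \<in> V"
    have "restr V (fs i) b = restr V (fs j) b" using ij(3) by simp
    then have e: "fs i b = fs j b" using b by (simp add: restr_def)
    have "(\<Sum>k<n. ?c k * fs k b) = (\<Sum>k<n. (if k = i then fs i b else 0) + (if k = j then - fs j b else 0))"
      by (rule sum.cong) (use ij in auto)
    also have "\<dots> = fs i b - fs j b" using ij by (simp add: sum.distrib)
    finally show "(\<Sum>k<n. ?c k * fs k b) = 0" using e by simp
  qed
  moreover have "(\<forall>b\<in>V. (\<Sum>k<n. ?c k * fs k b) = 0) \<longrightarrow> (\<forall>k<n. ?c k = 0)"
    using assms(1) unfolding indep_on_def by (rule spec)
  ultimately show False using ij by auto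
qed

lemma indep_on_independent:
  assumes "indep_on V n fs"
  shows "\<not> fvs.dependent ((\<lambda>j. restr V (fs j)) ` {..<n})"
proof
  let ?r = "\<lambda>j. restr V (fs j)"
  assume "fvs.dependent (?r ` {..<n})"
  then obtain u v where uv: "v \<in> ?r ` {..<n}" "u v \<noteq> 0" "(\<Sum>w\<in>?r ` {..<n}. fscale (u w) w) = 0"
    by (auto simp: fvs.dependent_finite)
  have "(\<Sum>j<n. fscale (u (?r j)) (?r j)) = 0"
    using uv(3) by (simp add: sum.reindex[OF indep_on_inj[OF assms]])
  then have h: "\<forall>x. (\<Sum>j<n. u (?r j) * restr V (fs j) x) = 0"
    by (auto simp: fun_eq_iff sum_fun_apply fscale_def)
  have "\<forall>b\<in>V. (\<Sum>j<n. u (?r j) * fs j b) = 0"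
  proof
    fix b assume "b \<in> V" then show "(\<Sum>j<n. u (?r j) * fs j b) = 0" using h[rule_format, of b] by (simp add: restr_def)
  qed
  moreover have "(\<forall>b\<in>V. (\<Sum>j<n. (\<lambda>j. u (?r j)) j * fs j b) = 0) \<longrightarrow> (\<forall>j<n. (\<lambda>j. u (?r j)) j = 0)"
    using assms unfolding indep_on_def by (rule spec)
  ultimately have "\<forall>j<n. u (?r j) = 0" by simp
  with uv show False by auto
qed

lemma indep_on_card:
  assumes "finite V" "indep_on V n fs"
  shows "n \<le> card V"
proof -
  let ?r = "\<lambda>j. restr V (fs j)"
  have "finite (?r ` {..<n}) \<and> card (?r ` {..<n}) \<le> card (delta ` V)"
    by (rule fvs.independent_span_bound) (use assms indep_on_independent restr_in_span in auto)
  moreover have "card (?r ` {..<n}) = n" using card_image[OF indep_on_inj[OF assms(2)]] by simp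
  ultimately show ?thesis using card_image_le[OF assms(1), of delta] by linarith
qed


lemma fiber_op_lin:
  "fiber_op adj \<theta> (\<lambda>x. \<Sum>j\<in>J. c j * g j x) b = (\<Sum>j\<in>J. c j * fiber_op adj \<theta> (g j) b)"
  unfolding fiber_op_def
  by (simp add: sum_subtractf right_diff_distrib sum_distrib_left sum.swap[of _ J] mult.left_commute)

lemma fiber_op_scale:
  "fiber_op adj \<theta> (\<lambda>x. c * g x) b = c * fiber_op adj \<theta> g b"
  using fiber_op_lin[of adj \<theta> "\<lambda>_. c" "\<lambda>_. g" "{()}" b] by simp

lemma fiber_op_zero: "fiber_op adj \<theta> (\<lambda>x. 0) b = 0"
  unfolding fiber_op_def by simp

definition eigvec where
  "eigvec adj \<theta> V lam f \<longleftrightarrow> (\<forall>b\<in>V. fiber_op adj \<theta> f b = complex_of_real lam * f b)"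

definition eigfam where
  "eigfam adj \<theta> V lam n fs \<longleftrightarrow> (\<forall>j<n. eigvec adj \<theta> V lam (fs j)) \<and> indep_on V n fs"

lemma eigmult_alt: "eigmult adj V \<theta> lam = (GREATEST n. \<exists>fs. eigfam adj \<theta> V lam n fs)"
  unfolding eigmult_def eigfam_def eigvec_def indep_on_def by simp

locale fibsp =
  fixes adj :: "(int^'d::finite) \<times> 'b \<Rightarrow> (int^'d) \<times> 'b \<Rightarrow> bool" and \<theta> :: "real^'d" and V :: "'b set"
  assumes finV: "finite V"
    and loc: "\<And>f g b. (\<forall>b\<in>V. f b = g b) \<Longrightarrow> b \<in> V \<Longrightarrow> fiber_op adj \<theta> f b = fiber_op adj \<theta> g b"
begin

abbreviation "em lam \<equiv> eigmult adj V \<theta> lam"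

lemma em_bound: "eigfam adj \<theta> V lam n fs \<Longrightarrow> n \<le> card V"
  unfolding eigfam_def using indep_on_card finV by blast

lemma em_ge: assumes "eigfam adj \<theta> V lam n fs" shows "n \<le> em lam"
  unfolding eigmult_alt
  by (rule Greatest_le_nat[of _ n "card V"]) (use assms em_bound in auto)

lemma em_ex: "\<exists>fs. eigfam adj \<theta> V lam (em lam) fs"
  unfolding eigmult_alt
  by (rule GreatestI_nat[of _ 0 "card V"]) (auto simp: eigfam_def indep_on_def intro: em_bound)

lemma em_le: "em lam \<le> card V"
  using em_ex em_bound by blast

lemma is_eig_iff: "is_eig adj V \<theta> lam \<longleftrightarrow> em lam \<ge> 1"
proof
  assume "is_eig adj V \<theta> lam"
  then obtain f where f: "\<exists>b\<in>V. f b \<noteq> 0" "eigvec adj \<theta> V lam f"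
    unfolding is_eig_def eigvec_def by blast
  have "eigfam adj \<theta> V lam 1 (\<lambda>_. f)"
    using f unfolding eigfam_def indep_on_def by auto
  then show "em lam \<ge> 1" by (rule em_ge)
next
  assume "em lam \<ge> 1"
  moreover obtain fs where "eigfam adj \<theta> V lam (em lam) fs" using em_ex by blast
  ultimately show "is_eig adj V \<theta> lam"
    unfolding is_eig_def eigfam_def eigvec_def using indep_on_nonzero[of V "em lam" fs 0] by auto
qed

lemma eig_sum_zero:
  assumes "finite M" "\<forall>mu\<in>M. eigvec adj \<theta> V mu (v mu)" "\<forall>b\<in>V. (\<Sum>mu\<in>M. v mu b) = 0"
  shows "\<forall>mu\<in>M. \<forall>b\<in>V. v mu b = 0"
  using assms
proof (induction M arbitrary: v rule: finite_induct)
  case empty then show ?case by simp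
next
  case (insert m M)
  let ?z = "\<lambda>x. \<Sum>mu\<in>insert m M. 1 * v mu x"
  have A: "(\<Sum>mu\<in>insert m M. complex_of_real mu * v mu b) = 0" if b: "b \<in> V" for b
  proof -
    have "fiber_op adj \<theta> ?z b = fiber_op adj \<theta> (\<lambda>x. 0) b"
      by (rule loc) (use insert.prems(2) b in auto)
    also have "\<dots> = 0" by (rule fiber_op_zero)
    finally have "(\<Sum>mu\<in>insert m M. 1 * fiber_op adj \<theta> (v mu) b) = 0"
      by (simp only: fiber_op_lin)
    then show ?thesis using insert.prems(1) b unfolding eigvec_def by simp
  qed
  let ?v' = "\<lambda>mu x. complex_of_real (mu - m) * v mu x"
  have B: "\<forall>b\<in>V. (\<Sum>mu\<in>M. ?v' mu b) = 0"
  proof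
    fix b assume b: "b \<in> V"
    have s0: "v m b + (\<Sum>mu\<in>M. v mu b) = 0" using insert.prems(2) b insert.hyps by simp
    have s1: "of_real m * v m b + (\<Sum>mu\<in>M. of_real mu * v mu b) = 0" using A[OF b] insert.hyps by simp
    have "(\<Sum>mu\<in>M. ?v' mu b) = (\<Sum>mu\<in>M. of_real mu * v mu b - of_real m * v mu b)"
      by (rule sum.cong) (simp_all add: left_diff_distrib)
    also have "\<dots> = (\<Sum>mu\<in>M. of_real mu * v mu b) - of_real m * (\<Sum>mu\<in>M. v mu b)"
      by (simp add: sum_subtractf sum_distrib_left)
    also have "\<dots> = (of_real m * v m b + (\<Sum>mu\<in>M. of_real mu * v mu b)) - of_real m * (v m b + (\<Sum>mu\<in>M. v mu b))"
      by (simp add: algebra_simps)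
    also have "\<dots> = 0" using s0 s1 by simp
    finally show "(\<Sum>mu\<in>M. ?v' mu b) = 0" .
  qed
  have C: "\<forall>mu\<in>M. eigvec adj \<theta> V mu (?v' mu)"
    using insert.prems(1) unfolding eigvec_def by (simp add: fiber_op_scale)
  from insert.IH[OF C B] have D: "\<forall>mu\<in>M. \<forall>b\<in>V. v mu b = 0"
    using insert.hyps by auto
  have E: "\<forall>b\<in>V. v m b = 0"
    using insert.prems(2) insert.hyps D by simp
  show ?case using D E by auto
qed


lemma em_sum_le:
  assumes M: "finite M"
  shows "(\<Sum>mu\<in>M. em mu) \<le> card V"
proof -
  obtain F where F: "\<And>mu. eigfam adj \<theta> V mu (em mu) (F mu)" using em_ex by metis
  define r where "r mu j = restr V (F mu j)" for mu j
  define R where "R mu = r mu ` {..<em mu}" for mu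
  have ind: "indep_on V (em mu) (F mu)" for mu using F unfolding eigfam_def by blast
  have ev: "\<And>j b. j < em mu \<Longrightarrow> b \<in> V \<Longrightarrow> fiber_op adj \<theta> (F mu j) b = complex_of_real mu * F mu j b" for mu
    using F unfolding eigfam_def eigvec_def by blast
  have injr: "inj_on (r mu) {..<em mu}" for mu using indep_on_inj[OF ind] unfolding r_def .
  have cardR: "card (R mu) = em mu" for mu unfolding R_def using card_image[OF injr] by simp
  have finR: "finite (R mu)" for mu unfolding R_def by simp
  have disj: "R mu \<inter> R mu' = {}" if neq: "mu \<noteq> mu'" for mu mu'
  proof (rule ccontr)
    assume "R mu \<inter> R mu' \<noteq> {}"
    then obtain j j' where jj: "j < em mu" "j' < em mu'" "r mu j = r mu' j'" unfolding R_def by auto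
    have eq: "F mu j b = F mu' j' b" if "b \<in> V" for b
      using fun_cong[OF jj(3), of b] that by (simp add: r_def restr_def)
    have "F mu j b = 0" if b: "b \<in> V" for b
    proof -
      have "complex_of_real mu * F mu j b = fiber_op adj \<theta> (F mu j) b" using ev[OF jj(1) b] by simp
      also have "\<dots> = fiber_op adj \<theta> (F mu' j') b" by (rule loc) (use eq b in auto)
      also have "\<dots> = complex_of_real mu' * F mu j b" using ev[OF jj(2) b] eq[OF b] by simp
      finally have "complex_of_real (mu - mu') * F mu j b = 0" by (simp add: algebra_simps)
      then show ?thesis using neq by simp
    qed
    with indep_on_nonzero[OF ind jj(1)] show False by blast
  qed
  let ?S = "\<Union>(R ` M)"
  have cardS: "card ?S = (\<Sum>mu\<in>M. em mu)"
    using card_UN_disjoint[OF M, of R] finR disj cardR by simp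
  have nd: "\<not> fvs.dependent ?S"
  proof
    assume "fvs.dependent ?S"
    then obtain u v0 where uv: "v0 \<in> ?S" "u v0 \<noteq> 0" "(\<Sum>v\<in>?S. fscale (u v) v) = 0"
      using M finR by (auto simp: fvs.dependent_finite)
    define w where "w mu = (\<lambda>b. \<Sum>j<em mu. u (r mu j) * F mu j b)" for mu
    have rs: "(\<Sum>v\<in>R mu. fscale (u v) v) = (\<Sum>j<em mu. fscale (u (r mu j)) (r mu j))" for mu
      unfolding R_def by (simp add: sum.reindex[OF injr])
    have "(\<Sum>v\<in>?S. fscale (u v) v) = (\<Sum>mu\<in>M. \<Sum>v\<in>R mu. fscale (u v) v)"
      by (rule sum.UNION_disjoint) (use M finR disj in auto)
    then have z: "(\<Sum>mu\<in>M. \<Sum>j<em mu. fscale (u (r mu j)) (r mu j)) = 0" using uv(3) rs by simp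
    have wz: "\<forall>b\<in>V. (\<Sum>mu\<in>M. w mu b) = 0"
    proof
      fix b assume b: "b \<in> V"
      have "(\<Sum>mu\<in>M. \<Sum>j<em mu. fscale (u (r mu j)) (r mu j)) b = 0" using z by simp
      then show "(\<Sum>mu\<in>M. w mu b) = 0"
        using b by (simp add: sum_fun_apply w_def fscale_def r_def restr_def)
    qed
    have we: "\<forall>mu\<in>M. eigvec adj \<theta> V mu (w mu)"
      unfolding eigvec_def w_def
      by (auto simp: fiber_op_lin ev sum_distrib_left mult.left_commute intro!: sum.cong)
    have w0: "\<forall>mu\<in>M. \<forall>b\<in>V. w mu b = 0" by (rule eig_sum_zero[OF M we wz])
    obtain mu j where mj: "mu \<in> M" "j < em mu" "v0 = r mu j" using uv(1) unfolding R_def by auto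
    have "(\<forall>b\<in>V. (\<Sum>j<em mu. (\<lambda>j. u (r mu j)) j * F mu j b) = 0) \<longrightarrow> (\<forall>j<em mu. (\<lambda>j. u (r mu j)) j = 0)"
      using ind[of mu] unfolding indep_on_def by (rule spec)
    then have "\<forall>j<em mu. u (r mu j) = 0" using w0 mj(1) unfolding w_def by simp
    then show False using mj uv(2) by simp
  qed
  have sp: "?S \<subseteq> fvs.span (delta ` V)"
    unfolding R_def r_def using restr_in_span[OF finV] by auto
  have "card ?S \<le> card (delta ` V)"
    using fvs.independent_span_bound[OF _ nd sp] finV by simp
  also have "\<dots> \<le> card V" by (rule card_image_le[OF finV])
  finally show ?thesis using cardS by simp
qed

end

definition lamv :: "nat \<Rightarrow> nat \<Rightarrow> real" where
  "lamv N j = 1 - cos (real j * pi / real (N + 1))"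

definition phic :: "nat \<Rightarrow> nat \<Rightarrow> real \<Rightarrow> real" where
  "phic N i c = (if even i then real i * pi + arccos c else real (i + 1) * pi - arccos c) / real (N + 1)"

definition ndc :: "nat \<Rightarrow> nat \<Rightarrow> real \<Rightarrow> real" where
  "ndc N i c = 1 - cos (phic N i c)"

lemma ang_bounds: assumes "j \<le> N + 1" shows "0 \<le> real j * pi / real (N + 1) \<and> real j * pi / real (N + 1) \<le> pi"
proof -
  have "real j * pi \<le> real (N + 1) * pi" using assms by (intro mult_right_mono) auto
  then show ?thesis by (simp add: pos_divide_le_eq del: of_nat_Suc)
qed

lemma lamv_0 [simp]: "lamv N 0 = 0" by (simp add: lamv_def)
lemma lamv_last [simp]: "lamv N (N + 1) = 2"
proof -
  have "real (N + 1) * pi / real (N + 1) = pi" by (simp del: of_nat_Suc)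
  then show ?thesis unfolding lamv_def by simp
qed

lemma lamv_less: "j < j' \<Longrightarrow> j' \<le> N + 1 \<Longrightarrow> lamv N j < lamv N j'"
  unfolding lamv_def using ang_bounds[of j N] ang_bounds[of j' N]
  by (auto intro!: cos_monotone_0_pi simp: divide_strict_right_mono)

lemma lamv_le: "j \<le> j' \<Longrightarrow> j' \<le> N + 1 \<Longrightarrow> lamv N j \<le> lamv N j'"
  using lamv_less[of j j' N] by (cases "j = j'") auto

lemma lamv_inj: "j \<le> N + 1 \<Longrightarrow> j' \<le> N + 1 \<Longrightarrow> lamv N j = lamv N j' \<Longrightarrow> j = j'"
  using lamv_less[of j j' N] lamv_less[of j' j N] by (cases j j' rule: linorder_cases) auto

lemma lamv_range: "j \<le> N + 1 \<Longrightarrow> 0 \<le> lamv N j \<and> lamv N j \<le> 2"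
  using lamv_le[of 0 j N] lamv_le[of j "N+1" N] lamv_last[of N] by auto

context
  fixes c :: real
  assumes c1: "-1 \<le> c" and c2: "c \<le> 1"
begin

lemma phic_bounds:
  "real i * pi / real (N + 1) \<le> phic N i c \<and> phic N i c \<le> real (i + 1) * pi / real (N + 1)"
  using arccos_lbound[OF c1 c2] arccos_ubound[OF c1 c2]
  by (auto simp: phic_def divide_right_mono algebra_simps)

lemma phic_cos: "cos (real (N + 1) * phic N i c) = c"
proof -
  have e: "real (N + 1) * phic N i c = (if even i then real i * pi + arccos c else real (i + 1) * pi - arccos c)"
    unfolding phic_def by (simp del: of_nat_Suc)
  show ?thesis
  proof (cases "even i")
    case True
    then show ?thesis unfolding e using c1 c2 by (simp add: cos_add)
  next
    case False
    then have "even (i + 1)" by simp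
    then show ?thesis unfolding e using c1 c2 by (simp add: cos_diff del: of_nat_Suc)
  qed
qed

lemma phic_0pi: assumes "i \<le> N" shows "0 \<le> phic N i c \<and> phic N i c \<le> pi"
proof -
  have a: "i \<le> N + 1" "i + 1 \<le> N + 1" using assms by auto
  show ?thesis using phic_bounds[of i N] ang_bounds[OF a(1)] ang_bounds[OF a(2)] by linarith
qed

lemma ndc_bounds: "i \<le> N \<Longrightarrow> lamv N i \<le> ndc N i c \<and> ndc N i c \<le> lamv N (i + 1)"
proof -
  assume i: "i \<le> N"
  have a: "i \<le> N + 1" "i + 1 \<le> N + 1" using i by auto
  show ?thesis
    unfolding ndc_def lamv_def using phic_bounds[of i N] ang_bounds[OF a(1)] ang_bounds[OF a(2)] phic_0pi[OF i]
    by (auto intro!: cos_monotone_0_pi_le simp del: of_nat_Suc)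
qed

lemma ndc_eq_lamv:
  assumes "i \<le> N" "j \<le> N + 1" "ndc N i c = lamv N j"
  shows "c = (-1) ^ j \<and> (j = i \<or> j = i + 1)"
proof -
  have cc: "cos (phic N i c) = cos (real j * pi / real (N + 1))" using assms(3) by (simp add: ndc_def lamv_def)
  have p: "phic N i c = real j * pi / real (N + 1)"
    using cos_inj_pi[OF _ _ _ _ cc] phic_0pi[OF assms(1)] ang_bounds[OF assms(2)] by blast
  then have e: "real (N + 1) * phic N i c = real j * pi" by (simp del: of_nat_Suc)
  have "c = (-1) ^ j" using phic_cos[of N i] unfolding e by simp
  moreover have "j = i \<or> j = i + 1"
  proof -
    have "real i * pi / real (N + 1) \<le> real j * pi / real (N + 1)" "real j * pi / real (N + 1) \<le> real (i + 1) * pi / real (N + 1)"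
      using phic_bounds[of i N] unfolding p by auto
    then have "real i * pi \<le> real j * pi" "real j * pi \<le> real (i + 1) * pi"
      by (simp_all add: divide_le_cancel del: of_nat_Suc)
    then have "real i \<le> real j" "real j \<le> real (i + 1)" by (auto simp: mult_le_cancel_right pi_gt_zero)
    then show ?thesis by linarith
  qed
  ultimately show ?thesis by blast
qed

end

lemma mem_fund_verts: "b \<in> fund_verts N \<longleftrightarrow> b = None \<or> (\<exists>s k. b = Some (s, k) \<and> 1 \<le> k \<and> k \<le> N)"
  unfolding fund_verts_def by auto

lemma fund_verts_eq: "fund_verts N = insert None ((\<lambda>(s, k). Some (s, k)) ` (UNIV \<times> {1..N}))"
  unfolding fund_verts_def by auto

lemma finite_fund_verts: "finite (fund_verts N :: ('d::finite \<times> nat) option set)"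
  unfolding fund_verts_eq by simp

lemma card_fund_verts: "card (fund_verts N :: ('d::finite \<times> nat) option set) = CARD('d) * N + 1"
proof -
  have inj: "inj_on (\<lambda>(s, k). Some (s, k)) (UNIV \<times> {1..N} :: ('d \<times> nat) set)" by (auto simp: inj_on_def)
  have "card ((\<lambda>(s, k). Some (s, k)) ` (UNIV \<times> {1..N} :: ('d \<times> nat) set)) = CARD('d) * N"
    using card_image[OF inj] by (simp add: card_cartesian_product)
  then show ?thesis unfolding fund_verts_eq by (subst card_insert_disjoint) auto
qed

lemma fibsp_sub: "N \<ge> 1 \<Longrightarrow> fibsp (sub_adj N) (\<theta>::real^'d::finite) (fund_verts N)"
proof (unfold_locales)
  assume N: "N \<ge> 1"
  show "finite (fund_verts N :: ('d \<times> nat) option set)" by (rule finite_fund_verts)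
  fix f g :: "('d \<times> nat) option \<Rightarrow> complex" and b :: "('d \<times> nat) option"
  assume fg: "\<forall>b\<in>fund_verts N. f b = g b" and b: "b \<in> fund_verts N"
  have fgS: "f (Some (s, k)) = g (Some (s, k))" if "1 \<le> k" "k \<le> N" for s k
    using fg that by (auto simp: mem_fund_verts)
  have fgN: "f None = g None" using fg by (auto simp: mem_fund_verts)
  from b show "fiber_op (sub_adj N) \<theta> f b = fiber_op (sub_adj N) \<theta> g b"
  proof (cases b)
    case None
    then show ?thesis using N by (simp add: fiber_None fgS fgN)
  next
    case (Some sk)
    then obtain s k where sk: "b = Some (s, k)" "1 \<le> k" "k \<le> N" using b by (auto simp: mem_fund_verts)
    show ?thesis unfolding sk(1) fiber_Some[OF sk(2,3)] using sk fgN fgS[of k s] fgS[of "k-1" s] fgS[of "k+1" s]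
      by auto
  qed
qed

lemma edge_eq:
  fixes \<theta> :: "real^'d::finite" and h :: "('d \<times> nat) option \<Rightarrow> complex"
  assumes k: "1 \<le> k" "k \<le> N"
    and hN: "h None = a * complex_of_real (sqrt (real CARD('d)))"
    and hS: "\<And>s k. h (Some (s, k)) = a * complex_of_real (cos (real k * \<phi>)) + Q s * complex_of_real (sin (real k * \<phi>))"
    and hb: "a * complex_of_real (cos (real (N + 1) * \<phi>)) + Q s * complex_of_real (sin (real (N + 1) * \<phi>)) = cis (\<theta>$s) * a"
  shows "fiber_op (sub_adj N) \<theta> h (Some (s, k)) = complex_of_real (1 - cos \<phi>) * h (Some (s, k))"
proof -
  define E where "E x = a * complex_of_real (cos (x * \<phi>)) + Q s * complex_of_real (sin (x * \<phi>))" for x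
  have sd: "sqrt (real CARD('d)) \<noteq> 0" by simp
  have prev: "(if k = 1 then h None / complex_of_real (2 * sqrt (real CARD('d))) else h (Some (s, k - 1)) / 2) = E (real k - 1) / 2"
  proof (cases "k = 1")
    case True then show ?thesis using sd by (simp add: hN E_def field_simps)
  next
    case False then show ?thesis using k by (simp add: hS E_def of_nat_diff)
  qed
  have next': "(if k = N then cis (\<theta>$s) * h None / complex_of_real (2 * sqrt (real CARD('d))) else h (Some (s, k + 1)) / 2) = E (real k + 1) / 2"
  proof (cases "k = N")
    case True then show ?thesis using sd hb by (simp add: hN E_def field_simps)
  next
    case False then show ?thesis by (simp add: hS E_def add.commute)
  qed
  have c: "cos ((x - 1) * \<phi>) + cos ((x + 1) * \<phi>) = 2 * cos \<phi> * cos (x * \<phi>)" for x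
    by (simp add: algebra_simps cos_add cos_diff)
  have s: "sin ((x - 1) * \<phi>) + sin ((x + 1) * \<phi>) = 2 * cos \<phi> * sin (x * \<phi>)" for x
    by (simp add: algebra_simps sin_add sin_diff)
  have "E (real k - 1) + E (real k + 1) = complex_of_real (2 * cos \<phi>) * E (real k)"
  proof -
    have "E (real k - 1) + E (real k + 1) = a * complex_of_real (cos ((real k - 1) * \<phi>) + cos ((real k + 1) * \<phi>))
        + Q s * complex_of_real (sin ((real k - 1) * \<phi>) + sin ((real k + 1) * \<phi>))"
      unfolding E_def by (simp add: algebra_simps)
    also have "\<dots> = complex_of_real (2 * cos \<phi>) * E (real k)" unfolding c s E_def by (simp add: algebra_simps)
    finally show ?thesis .
  qed
  moreover have "h (Some (s, k)) = E (real k)" by (simp add: hS E_def)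
  ultimately show ?thesis
    unfolding fiber_Some[OF k] prev next' by (simp add: algebra_simps add_divide_distrib[symmetric])
qed

lemma node_eq:
  fixes \<theta> :: "real^'d::finite" and h :: "('d \<times> nat) option \<Rightarrow> complex"
  assumes N: "N \<ge> 1"
    and hN: "h None = a * complex_of_real (sqrt (real CARD('d)))"
    and hsum: "(\<Sum>s\<in>UNIV. h (Some (s,1)) + cis (- (\<theta>$s)) * h (Some (s,N))) = complex_of_real (2 * real CARD('d) * cos \<phi>) * a"
  shows "fiber_op (sub_adj N) \<theta> h None = complex_of_real (1 - cos \<phi>) * h None"
proof -
  have sd: "sqrt (real CARD('d)) > 0" by simp
  have dd: "real CARD('d) = sqrt (real CARD('d)) * sqrt (real CARD('d))" by simp
  have "complex_of_real (2 * real CARD('d) * cos \<phi>) * a / complex_of_real (2 * sqrt (real CARD('d)))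
      = complex_of_real (cos \<phi>) * (a * complex_of_real (sqrt (real CARD('d))))"
  proof -
    have ddc: "complex_of_nat CARD('d) = complex_of_real (sqrt (real CARD('d))) * complex_of_real (sqrt (real CARD('d)))"
      by (simp flip: of_real_mult)
    show ?thesis using sd by (simp add: field_simps ddc)
  qed
  then show ?thesis unfolding fiber_None[OF N] hsum hN by (simp add: algebra_simps)
qed


lemma allcos:
  fixes \<theta> :: "real^'d::finite"
  assumes "(\<Sum>s\<in>UNIV. cos (\<theta>$s)) = real CARD('d) * C" "C = 1 \<or> C = -1"
  shows "cos (\<theta>$s) = C"
  using assms(2)
proof
  assume C: "C = 1"
  have "(\<Sum>s\<in>UNIV. 1 - cos (\<theta>$s)) = 0" using assms(1) C by (simp add: sum_subtractf)
  then have "\<forall>s\<in>UNIV. 1 - cos (\<theta>$s) = 0" by (subst (asm) sum_nonneg_eq_0_iff) auto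
  then show ?thesis using C by auto
next
  assume C: "C = -1"
  have "(\<Sum>s\<in>UNIV. 1 + cos (\<theta>$s)) = 0" using assms(1) C by (simp add: sum.distrib)
  moreover have "0 \<le> 1 + cos x" for x :: real using cos_ge_minus_one[of x] by linarith
  ultimately have "\<forall>s\<in>UNIV. 1 + cos (\<theta>$s) = 0" by (subst (asm) sum_nonneg_eq_0_iff) auto
  then have "1 + cos (\<theta>$s) = 0" by blast
  then show ?thesis using C by linarith
qed

lemma cis_sum_conj: "cis t + cis (- t) = complex_of_real (2 * cos t)"
  by (simp add: complex_eq_iff)

lemma cis_neg_mult: "cis (- t) * cis t = 1"
  by (simp add: cis_mult)

definition gB :: "nat \<Rightarrow> real^'d::finite \<Rightarrow> real \<Rightarrow> 'd \<Rightarrow> complex" where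
  "gB N \<theta> \<phi> s = (cis (\<theta>$s) - complex_of_real (cos (real (N + 1) * \<phi>))) / complex_of_real (sin (real (N + 1) * \<phi>))"

definition gvec :: "nat \<Rightarrow> real^'d::finite \<Rightarrow> real \<Rightarrow> ('d \<times> nat) option \<Rightarrow> complex" where
  "gvec N \<theta> \<phi> b = (case b of None \<Rightarrow> complex_of_real (sqrt (real CARD('d)))
     | Some (s, k) \<Rightarrow> complex_of_real (cos (real k * \<phi>)) + gB N \<theta> \<phi> s * complex_of_real (sin (real k * \<phi>)))"

lemma gvec_None: "gvec N \<theta> \<phi> None \<noteq> 0"
  by (simp add: gvec_def)

lemma gvec_eig:
  fixes \<theta> :: "real^'d::finite"
  assumes N: "N \<ge> 1" and hc: "(\<Sum>s\<in>UNIV. cos (\<theta>$s)) = real CARD('d) * cos (real (N + 1) * \<phi>)"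
  shows "eigvec (sub_adj N) \<theta> (fund_verts N) (1 - cos \<phi>) (gvec N \<theta> \<phi>)"
proof -
  define C where "C = cos (real (N + 1) * \<phi>)"
  define S where "S = sin (real (N + 1) * \<phi>)"
  let ?B = "gB N \<theta> \<phi>"
  have CS: "S^2 + C^2 = 1" unfolding C_def S_def by simp
  have hb: "1 * complex_of_real C + ?B s * complex_of_real S = cis (\<theta>$s) * 1" for s
  proof (cases "S = 0")
    case False then show ?thesis unfolding gB_def C_def[symmetric] S_def[symmetric] by (simp add: field_simps)
  next
    case True
    then have "C = 1 \<or> C = -1" using CS by (simp add: power2_eq_1_iff)
    then have cs: "cos (\<theta>$s) = C" using allcos[of \<theta> C s] hc unfolding C_def by blast
    then have "sin (\<theta>$s) = 0" using sin_cos_squared_add[of "\<theta>$s"] \<open>C = 1 \<or> C = -1\<close> by auto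
    then have "cis (\<theta>$s) = complex_of_real C" using cs by (simp add: complex_eq_iff)
    then show ?thesis using True by simp
  qed
  have hS: "gvec N \<theta> \<phi> (Some (s, k)) = 1 * complex_of_real (cos (real k * \<phi>)) + ?B s * complex_of_real (sin (real k * \<phi>))" for s k
    by (simp add: gvec_def)
  have hN: "gvec N \<theta> \<phi> None = 1 * complex_of_real (sqrt (real CARD('d)))" by (simp add: gvec_def)
  define T where "T s = ?B s + cis (- (\<theta>$s)) * (complex_of_real S - ?B s * complex_of_real C)" for s
  have trm: "gvec N \<theta> \<phi> (Some (s,1)) + cis (- (\<theta>$s)) * gvec N \<theta> \<phi> (Some (s,N))
      = complex_of_real (2 * cos \<phi>) + complex_of_real (sin \<phi>) * T s" for s
  proof -
    have rN: "real N * \<phi> = real (N + 1) * \<phi> - \<phi>" by (simp add: algebra_simps)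
    have cN: "cos (real N * \<phi>) = C * cos \<phi> + S * sin \<phi>" unfolding rN C_def S_def by (simp add: cos_diff)
    have sN: "sin (real N * \<phi>) = S * cos \<phi> - C * sin \<phi>" unfolding rN C_def S_def by (simp add: sin_diff)
    have "gvec N \<theta> \<phi> (Some (s,N)) = complex_of_real (cos \<phi>) * (complex_of_real C + ?B s * complex_of_real S)
        + complex_of_real (sin \<phi>) * (complex_of_real S - ?B s * complex_of_real C)"
      unfolding hS cN sN by (simp add: algebra_simps)
    also have "\<dots> = complex_of_real (cos \<phi>) * cis (\<theta>$s) + complex_of_real (sin \<phi>) * (complex_of_real S - ?B s * complex_of_real C)"
      using hb[of s] by simp
    finally have gN: "gvec N \<theta> \<phi> (Some (s,N)) = \<dots>" .
    have "cis (- (\<theta>$s)) * gvec N \<theta> \<phi> (Some (s,N)) = complex_of_real (cos \<phi>) + complex_of_real (sin \<phi>) * (cis (- (\<theta>$s)) * (complex_of_real S - ?B s * complex_of_real C))"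
      unfolding gN using cis_neg_mult[of "\<theta>$s"] by (simp add: algebra_simps)
    then show ?thesis unfolding T_def hS by (simp add: algebra_simps)
  qed
  have Tsum: "(\<Sum>s\<in>UNIV. T s) = 0"
  proof (cases "S = 0")
    case True then show ?thesis unfolding T_def gB_def S_def[symmetric] by simp
  next
    case False
    have "T s = complex_of_real ((2 * cos (\<theta>$s) - 2 * C) / S)" for s
    proof -
      have "complex_of_real S * T s = (cis (\<theta>$s) - complex_of_real C) + cis (- (\<theta>$s)) * (complex_of_real (S^2) - complex_of_real C * (cis (\<theta>$s) - complex_of_real C))"
        unfolding T_def gB_def C_def[symmetric] S_def[symmetric] using False by (simp add: field_simps power2_eq_square)
      also have "\<dots> = cis (\<theta>$s) + cis (- (\<theta>$s)) * complex_of_real (S^2 + C^2) - 2 * complex_of_real C"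
        using cis_neg_mult[of "\<theta>$s"] by (simp add: algebra_simps power2_eq_square)
      also have "\<dots> = complex_of_real (2 * cos (\<theta>$s) - 2 * C)"
        using cis_sum_conj[of "\<theta>$s"] CS by simp
      finally show ?thesis using False by (simp add: field_simps)
    qed
    then have "(\<Sum>s\<in>UNIV. T s) = complex_of_real ((2 * (\<Sum>s\<in>UNIV. cos (\<theta>$s)) - 2 * real CARD('d) * C) / S)"
      by (simp add: sum_divide_distrib[symmetric] sum_subtractf sum_distrib_left)
    also have "\<dots> = 0" using hc unfolding C_def by simp
    finally show ?thesis .
  qed
  have hsum: "(\<Sum>s\<in>UNIV. gvec N \<theta> \<phi> (Some (s,1)) + cis (- (\<theta>$s)) * gvec N \<theta> \<phi> (Some (s,N)))
      = complex_of_real (2 * real CARD('d) * cos \<phi>) * 1"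
    unfolding trm by (simp add: sum.distrib sum_distrib_left[symmetric] Tsum)
  show ?thesis unfolding eigvec_def
  proof
    fix b :: "('d \<times> nat) option" assume b: "b \<in> fund_verts N"
    then consider "b = None" | s k where "b = Some (s, k)" "1 \<le> k" "k \<le> N" by (auto simp: mem_fund_verts)
    then show "fiber_op (sub_adj N) \<theta> (gvec N \<theta> \<phi>) b = complex_of_real (1 - cos \<phi>) * gvec N \<theta> \<phi> b"
    proof cases
      case 1 then show ?thesis using node_eq[OF N hN hsum] by simp
    next
      case 2
      have hb': "1 * complex_of_real (cos (real (N + 1) * \<phi>)) + ?B s * complex_of_real (sin (real (N + 1) * \<phi>)) = cis (\<theta>$s) * 1"
        using hb[of s] unfolding C_def S_def .
      show ?thesis using edge_eq[OF 2(2,3) hN hS hb'] 2(1) by simp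
    qed
  qed
qed


definition fvec :: "nat \<Rightarrow> nat \<Rightarrow> ('d \<Rightarrow> complex) \<Rightarrow> ('d \<times> nat) option \<Rightarrow> complex" where
  "fvec N j c b = (case b of None \<Rightarrow> 0
     | Some (s, k) \<Rightarrow> c s * complex_of_real (sin (real k * (real j * pi / real (N + 1)))))"

lemma fvec_eig:
  fixes \<theta> :: "real^'d::finite" and c :: "'d \<Rightarrow> complex"
  assumes N: "N \<ge> 1"
    and hc: "(\<Sum>s\<in>UNIV. c s * (1 - (-1)^j * cis (- (\<theta>$s)))) = 0"
  shows "eigvec (sub_adj N) \<theta> (fund_verts N) (lamv N j) (fvec N j c)"
proof -
  define \<phi> where "\<phi> = real j * pi / real (N + 1)"
  have e: "real (N + 1) * \<phi> = real j * pi" unfolding \<phi>_def by (simp del: of_nat_Suc)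
  have hS: "fvec N j c (Some (s, k)) = 0 * complex_of_real (cos (real k * \<phi>)) + c s * complex_of_real (sin (real k * \<phi>))" for s k
    by (simp add: fvec_def \<phi>_def)
  have hN: "fvec N j c None = 0 * complex_of_real (sqrt (real CARD('d)))" by (simp add: fvec_def)
  have hb: "0 * complex_of_real (cos (real (N + 1) * \<phi>)) + c s * complex_of_real (sin (real (N + 1) * \<phi>)) = cis (\<theta>$s) * 0" for s
    unfolding e by simp
  have sN: "sin (real N * \<phi>) = - ((-1)^j * sin \<phi>)"
  proof -
    have "real N * \<phi> = real j * pi - \<phi>" using e by (simp add: algebra_simps)
    then show ?thesis by (simp add: sin_diff)
  qed
  have hsum: "(\<Sum>s\<in>UNIV. fvec N j c (Some (s,1)) + cis (- (\<theta>$s)) * fvec N j c (Some (s,N)))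
      = complex_of_real (2 * real CARD('d) * cos \<phi>) * 0"
  proof -
    have "(\<Sum>s\<in>UNIV. fvec N j c (Some (s,1)) + cis (- (\<theta>$s)) * fvec N j c (Some (s,N)))
        = (\<Sum>s\<in>UNIV. complex_of_real (sin \<phi>) * (c s * (1 - (-1)^j * cis (- (\<theta>$s)))))"
    proof (rule sum.cong)
      fix s :: 'd
      have a: "fvec N j c (Some (s,1)) = c s * complex_of_real (sin \<phi>)" using hS[of s 1] by simp
      have b: "fvec N j c (Some (s,N)) = c s * complex_of_real (- ((-1)^j * sin \<phi>))" using hS[of s N] sN by simp
      show "fvec N j c (Some (s,1)) + cis (- (\<theta>$s)) * fvec N j c (Some (s,N)) =
          complex_of_real (sin \<phi>) * (c s * (1 - (-1)^j * cis (- (\<theta>$s))))"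
        unfolding a b by (simp add: algebra_simps)
    qed simp
    also have "\<dots> = 0" using hc by (simp add: sum_distrib_left[symmetric])
    finally show ?thesis by simp
  qed
  have lam: "lamv N j = 1 - cos \<phi>" by (simp add: lamv_def \<phi>_def)
  show ?thesis unfolding eigvec_def lam
  proof
    fix b :: "('d \<times> nat) option" assume b: "b \<in> fund_verts N"
    then consider "b = None" | s k where "b = Some (s, k)" "1 \<le> k" "k \<le> N" by (auto simp: mem_fund_verts)
    then show "fiber_op (sub_adj N) \<theta> (fvec N j c) b = complex_of_real (1 - cos \<phi>) * fvec N j c b"
    proof cases
      case 1 then show ?thesis using node_eq[OF N hN hsum] by simp
    next
      case 2 then show ?thesis using edge_eq[OF 2(2,3) hN hS hb] by simp
    qed
  qed
qed

definition cindep :: "nat \<Rightarrow> (nat \<Rightarrow> 'd \<Rightarrow> complex) \<Rightarrow> bool" where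
  "cindep m cs \<longleftrightarrow> (\<forall>a. (\<forall>s. (\<Sum>i<m. a i * cs i s) = 0) \<longrightarrow> (\<forall>i<m. a i = 0))"

lemma coeff_full: "\<exists>cs :: nat \<Rightarrow> 'd::finite \<Rightarrow> complex. cindep CARD('d) cs"
proof -
  obtain e where e: "bij_betw e {0..<CARD('d)} (UNIV :: 'd set)"
    using ex_bij_betw_nat_finite[of "UNIV :: 'd set"] by auto
  define cs where "cs i s = (if s = e i then 1 else 0 :: complex)" for i s
  have "cindep CARD('d) cs" unfolding cindep_def
  proof (intro allI impI)
    fix a :: "nat \<Rightarrow> complex" and i assume h: "\<forall>s. (\<Sum>i<CARD('d). a i * cs i s) = 0" and i: "i < CARD('d)"
    have inj: "inj_on e {..<CARD('d)}" using e by (simp add: bij_betw_def atLeast0LessThan)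
    have "(\<Sum>k<CARD('d). a k * cs k (e i)) = (\<Sum>k<CARD('d). if k = i then a i else 0)"
      by (rule sum.cong) (use inj i in \<open>auto simp: cs_def inj_on_def\<close>)
    also have "\<dots> = a i" using i by simp
    finally show "a i = 0" using h by simp
  qed
  then show ?thesis by blast
qed

lemma coeff_hyper:
  fixes w :: "'d::finite \<Rightarrow> complex"
  assumes w0: "w s0 \<noteq> 0"
  shows "\<exists>cs. cindep (CARD('d) - 1) cs \<and> (\<forall>i < CARD('d) - 1. (\<Sum>s\<in>UNIV. cs i s * w s) = 0)"
proof -
  have cardm: "card (UNIV - {s0}) = CARD('d) - 1" by (simp add: card_Diff_singleton)
  obtain e where e: "bij_betw e {0..<CARD('d) - 1} (UNIV - {s0})"
    using ex_bij_betw_nat_finite[of "UNIV - {s0}"] cardm by auto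
  have inj: "inj_on e {..<CARD('d) - 1}" using e by (simp add: bij_betw_def atLeast0LessThan)
  have ne: "e i \<noteq> s0" if "i < CARD('d) - 1" for i using e that by (auto simp: bij_betw_def)
  define cs where "cs i s = (if s = e i then 1 else if s = s0 then - w (e i) / w s0 else 0)" for i s
  have A: "(\<Sum>s\<in>UNIV. cs i s * w s) = 0" if i: "i < CARD('d) - 1" for i
  proof -
    have "(\<Sum>s\<in>UNIV. cs i s * w s) = (\<Sum>s\<in>UNIV. (if s = e i then w (e i) else 0) + (if s = s0 then - w (e i) else 0))"
      by (rule sum.cong) (use ne[OF i] w0 in \<open>auto simp: cs_def\<close>)
    also have "\<dots> = 0" by (simp add: sum.distrib)
    finally show ?thesis .
  qed
  have B: "cindep (CARD('d) - 1) cs" unfolding cindep_def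
  proof (intro allI impI)
    fix a :: "nat \<Rightarrow> complex" and i assume h: "\<forall>s. (\<Sum>i<CARD('d) - 1. a i * cs i s) = 0" and i: "i < CARD('d) - 1"
    have "(\<Sum>k<CARD('d) - 1. a k * cs k (e i)) = (\<Sum>k<CARD('d) - 1. if k = i then a i else 0)"
      by (rule sum.cong) (use inj i ne[OF i] in \<open>auto simp: cs_def inj_on_def\<close>)
    also have "\<dots> = a i" using i by simp
    finally show "a i = 0" using h by simp
  qed
  show ?thesis using A B by blast
qed

lemma fvec_comb_zero:
  fixes cs :: "nat \<Rightarrow> 'd::finite \<Rightarrow> complex"
  assumes j: "1 \<le> j" "j \<le> N"
    and h: "(\<Sum>i<m. a i * fvec N j (cs i) (Some (s, 1))) = 0"
  shows "(\<Sum>i<m. a i * cs i s) = 0"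
proof -
  have "0 < real j * pi / real (N + 1)" using j by simp
  moreover have "real j * pi / real (N + 1) < pi"
    using j by (simp add: divide_less_eq del: of_nat_Suc)
  ultimately have "sin (real j * pi / real (N + 1)) > 0" by (rule sin_gt_zero)
  then have sn: "sin (real j * pi / real (N + 1)) \<noteq> 0" by simp
  have "(\<Sum>i<m. a i * fvec N j (cs i) (Some (s, 1))) = (\<Sum>i<m. a i * cs i s) * complex_of_real (sin (real j * pi / real (N + 1)))"
    by (simp add: fvec_def sum_distrib_right mult.assoc)
  then show ?thesis using h sn by simp
qed

lemma em_F:
  fixes \<theta> :: "real^'d::finite" and cs :: "nat \<Rightarrow> 'd \<Rightarrow> complex"
  assumes N: "N \<ge> 1" and j: "1 \<le> j" "j \<le> N"
    and ci: "cindep m cs" and ce: "\<forall>i<m. (\<Sum>s\<in>UNIV. cs i s * (1 - (-1)^j * cis (- (\<theta>$s)))) = 0"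
  shows "m \<le> eigmult (sub_adj N) (fund_verts N) \<theta> (lamv N j)"
proof -
  interpret fibsp "sub_adj N" \<theta> "fund_verts N" by (rule fibsp_sub[OF N])
  have fam: "eigfam (sub_adj N) \<theta> (fund_verts N) (lamv N j) m (\<lambda>i. fvec N j (cs i))"
      unfolding eigfam_def
    proof
      show "\<forall>i<m. eigvec (sub_adj N) \<theta> (fund_verts N) (lamv N j) (fvec N j (cs i))"
        using fvec_eig[OF N] ce by blast
      show "indep_on (fund_verts N) m (\<lambda>i. fvec N j (cs i))" unfolding indep_on_def
      proof (intro allI impI)
        fix a k assume h: "\<forall>b\<in>fund_verts N. (\<Sum>i<m. a i * fvec N j (cs i) b) = 0" and k: "k < m"
        have "\<forall>s. (\<Sum>i<m. a i * cs i s) = 0"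
        proof
          fix s :: 'd
          have "Some (s, 1) \<in> fund_verts N" using j by (auto simp: mem_fund_verts)
          then show "(\<Sum>i<m. a i * cs i s) = 0" using fvec_comb_zero[OF j(1) j(2) h[rule_format]] by blast
        qed
        then show "a k = 0" using ci k unfolding cindep_def by blast
      qed
    qed
  show ?thesis by (rule em_ge[OF fam])
qed

lemma em_FG:
  fixes \<theta> :: "real^'d::finite" and cs :: "nat \<Rightarrow> 'd \<Rightarrow> complex"
  assumes N: "N \<ge> 1" and j: "1 \<le> j" "j \<le> N"
    and ci: "cindep m cs" and ce: "\<forall>i<m. (\<Sum>s\<in>UNIV. cs i s * (1 - (-1)^j * cis (- (\<theta>$s)))) = 0"
    and hc: "(\<Sum>s\<in>UNIV. cos (\<theta>$s)) = real CARD('d) * (-1)^j"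
  shows "m + 1 \<le> eigmult (sub_adj N) (fund_verts N) \<theta> (lamv N j)"
proof -
  interpret fibsp "sub_adj N" \<theta> "fund_verts N" by (rule fibsp_sub[OF N])
  define \<phi> where "\<phi> = real j * pi / real (N + 1)"
  have e: "real (N + 1) * \<phi> = real j * pi" unfolding \<phi>_def by (simp del: of_nat_Suc)
  have g: "eigvec (sub_adj N) \<theta> (fund_verts N) (lamv N j) (gvec N \<theta> \<phi>)"
    using gvec_eig[OF N, of \<theta> \<phi>] hc unfolding e by (simp add: lamv_def \<phi>_def)
  define fs where "fs i = (if i < m then fvec N j (cs i) else gvec N \<theta> \<phi>)" for i
  have fam: "eigfam (sub_adj N) \<theta> (fund_verts N) (lamv N j) (m + 1) fs"
      unfolding eigfam_def
    proof
      show "\<forall>i<m + 1. eigvec (sub_adj N) \<theta> (fund_verts N) (lamv N j) (fs i)"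
        using fvec_eig[OF N] ce g by (auto simp: fs_def)
      show "indep_on (fund_verts N) (m + 1) fs" unfolding indep_on_def
      proof (intro allI impI)
        fix a k assume h: "\<forall>b\<in>fund_verts N. (\<Sum>i<m + 1. a i * fs i b) = 0" and k: "k < m + 1"
        have "(\<Sum>i<m + 1. a i * fs i None) = a m * gvec N \<theta> \<phi> None"
          by (simp add: fs_def fvec_def)
        then have am: "a m = 0" using h gvec_None[of N \<theta> \<phi>] by (simp add: mem_fund_verts)
        have h': "\<forall>b\<in>fund_verts N. (\<Sum>i<m. a i * fvec N j (cs i) b) = 0"
          using h am by (simp add: fs_def)
        have "\<forall>s. (\<Sum>i<m. a i * cs i s) = 0"
        proof
          fix s :: 'd
          have "Some (s, 1) \<in> fund_verts N" using j by (auto simp: mem_fund_verts)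
          then show "(\<Sum>i<m. a i * cs i s) = 0" using fvec_comb_zero[OF j(1) j(2) h'[rule_format]] by blast
        qed
        then have "\<forall>i<m. a i = 0" using ci unfolding cindep_def by blast
        then show "a k = 0" using am k by (auto simp: less_Suc_eq)
      qed
    qed
  show ?thesis by (rule em_ge[OF fam])
qed

lemma em_G:
  fixes \<theta> :: "real^'d::finite"
  assumes N: "N \<ge> 1" and hc: "(\<Sum>s\<in>UNIV. cos (\<theta>$s)) = real CARD('d) * cos (real (N + 1) * \<phi>)"
  shows "1 \<le> eigmult (sub_adj N) (fund_verts N) \<theta> (1 - cos \<phi>)"
proof -
  interpret fibsp "sub_adj N" \<theta> "fund_verts N" by (rule fibsp_sub[OF N])
  show ?thesis
  proof (rule em_ge)
    show "eigfam (sub_adj N) \<theta> (fund_verts N) (1 - cos \<phi>) 1 (\<lambda>_. gvec N \<theta> \<phi>)"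
      unfolding eigfam_def indep_on_def
      using gvec_eig[OF N hc] gvec_None[of N \<theta> \<phi>] by (auto simp: mem_fund_verts)
  qed
qed

definition ccv :: "real^'d::finite \<Rightarrow> real" where
  "ccv \<theta> = (\<Sum>s\<in>UNIV. cos (\<theta>$s)) / real CARD('d)"

lemma ccv_sum: "(\<Sum>s\<in>UNIV. cos (\<theta>$s)) = real CARD('d) * ccv (\<theta>::real^'d::finite)"
  by (simp add: ccv_def)

lemma ccv_bounds: "-1 \<le> ccv (\<theta>::real^'d::finite) \<and> ccv \<theta> \<le> 1"
proof -
  have "(\<Sum>s\<in>UNIV. cos (\<theta>$s)) \<le> (\<Sum>s\<in>(UNIV::'d set). 1)" by (rule sum_mono) simp
  moreover have "(\<Sum>s\<in>(UNIV::'d set). -1) \<le> (\<Sum>s\<in>UNIV. cos (\<theta>$s))" by (rule sum_mono) simp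
  ultimately show ?thesis by (auto simp: ccv_def field_simps)
qed

definition ndv :: "nat \<Rightarrow> real^'d::finite \<Rightarrow> nat \<Rightarrow> real" where
  "ndv N \<theta> i = ndc N i (ccv \<theta>)"

definition Lam :: "nat \<Rightarrow> real set" where
  "Lam N = lamv N ` {1..N}"

definition cntv :: "nat \<Rightarrow> real^'d::finite \<Rightarrow> real \<Rightarrow> nat" where
  "cntv N \<theta> x = card {i\<in>{..N}. ndv N \<theta> i = x} + (if x \<in> Lam N then CARD('d) - 1 else 0)"

definition Vals :: "nat \<Rightarrow> real^'d::finite \<Rightarrow> real set" where
  "Vals N \<theta> = ndv N \<theta> ` {..N} \<union> Lam N"

lemma ndv_bounds: "i \<le> N \<Longrightarrow> lamv N i \<le> ndv N \<theta> i \<and> ndv N \<theta> i \<le> lamv N (i + 1)"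
  unfolding ndv_def using ndc_bounds ccv_bounds by blast

lemma ndv_eq_lamv:
  "i \<le> N \<Longrightarrow> j \<le> N + 1 \<Longrightarrow> ndv N \<theta> i = lamv N j \<Longrightarrow> ccv \<theta> = (-1) ^ j \<and> (j = i \<or> j = i + 1)"
  unfolding ndv_def using ndc_eq_lamv ccv_bounds by blast

lemma ndv_G:
  fixes \<theta> :: "real^'d::finite"
  assumes N: "N \<ge> 1" and i: "i \<le> N"
  shows "1 \<le> eigmult (sub_adj N) (fund_verts N) \<theta> (ndv N \<theta> i)"
proof -
  have "(\<Sum>s\<in>UNIV. cos (\<theta>$s)) = real CARD('d) * cos (real (N + 1) * phic N i (ccv \<theta>))"
    using phic_cos ccv_bounds ccv_sum by metis
  from em_G[OF N this] show ?thesis by (simp add: ndv_def ndc_def)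
qed

lemma card_le1: "(\<And>x y. x \<in> A \<Longrightarrow> y \<in> A \<Longrightarrow> x = y) \<Longrightarrow> card A \<le> 1"
  by (cases "finite A") (auto simp: card_le_Suc0_iff_eq)

lemma cnt_le_em:
  fixes \<theta> :: "real^'d::finite"
  assumes N: "N \<ge> 1"
  shows "cntv N \<theta> x \<le> eigmult (sub_adj N) (fund_verts N) \<theta> x"
proof (cases "x \<in> Lam N")
  case False
  have c1: "card {i\<in>{..N}. ndv N \<theta> i = x} \<le> 1"
  proof (rule card_le1)
    fix i i' assume ii: "i \<in> {i\<in>{..N}. ndv N \<theta> i = x}" "i' \<in> {i\<in>{..N}. ndv N \<theta> i = x}"
    show "i = i'"
    proof (rule ccontr)
      assume "i \<noteq> i'"
      then consider "i < i'" | "i' < i" by linarith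
      then show False
      proof cases
        case 1
        have "ndv N \<theta> i \<le> lamv N (i + 1)" "lamv N (i + 1) \<le> lamv N i'" "lamv N i' \<le> ndv N \<theta> i'"
          using ndv_bounds[of i N \<theta>] ndv_bounds[of i' N \<theta>] lamv_le[of "i+1" i' N] 1 ii by auto
        then have "x = lamv N (i + 1)" using ii by auto
        moreover have "i + 1 \<in> {1..N}" using 1 ii by auto
        ultimately show False using False by (auto simp: Lam_def)
      next
        case 2
        have "ndv N \<theta> i' \<le> lamv N (i' + 1)" "lamv N (i' + 1) \<le> lamv N i" "lamv N i \<le> ndv N \<theta> i"
          using ndv_bounds[of i' N \<theta>] ndv_bounds[of i N \<theta>] lamv_le[of "i'+1" i N] 2 ii by auto
        then have "x = lamv N (i' + 1)" using ii by auto
        moreover have "i' + 1 \<in> {1..N}" using 2 ii by auto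
        ultimately show False using False by (auto simp: Lam_def)
      qed
    qed
  qed
  show ?thesis
  proof (cases "{i\<in>{..N}. ndv N \<theta> i = x} = {}")
    case True then show ?thesis unfolding cntv_def True using False by simp
  next
    case ne: False
    then obtain i where i: "i \<le> N" "ndv N \<theta> i = x" by auto
    show ?thesis using ndv_G[OF N i(1), of \<theta>] c1 False i(2) by (simp add: cntv_def)
  qed
next
  case True
  then obtain j where j: "1 \<le> j" "j \<le> N" "x = lamv N j" by (auto simp: Lam_def)
  define w where "w s = 1 - (-1)^j * cis (- (\<theta>$s))" for s
  show ?thesis
  proof (cases "\<exists>s0. w s0 \<noteq> 0")
    case True
    then obtain s0 where s0: "w s0 \<noteq> 0" by blast
    have c0: "{i\<in>{..N}. ndv N \<theta> i = x} = {}"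
    proof (rule ccontr)
      assume "{i\<in>{..N}. ndv N \<theta> i = x} \<noteq> {}"
      then obtain i where i: "i \<le> N" "ndv N \<theta> i = lamv N j" using j by auto
      have cj: "ccv \<theta> = (-1)^j" using ndv_eq_lamv[OF i(1) _ i(2)] j by auto
      have "(-1::real)^j = 1 \<or> (-1::real)^j = -1" by (simp add: minus_one_power_iff)
      then have cs: "cos (\<theta>$s0) = (-1)^j" using allcos[of \<theta> "(-1)^j" s0] ccv_sum[of \<theta>] cj by simp
      moreover have "((-1::real)^j)^2 = 1" by (simp add: minus_one_power_iff)
      ultimately have "sin (\<theta>$s0) = 0" using sin_cos_squared_add[of "\<theta>$s0"] by simp
      then have "cis (- (\<theta>$s0)) = (-1)^j" using cs by (simp add: complex_eq_iff)
      then have "w s0 = 0" by (simp add: w_def flip: power_mult_distrib)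
      with s0 show False by simp
    qed
    obtain cs where cs: "cindep (CARD('d) - 1) cs" "\<forall>i < CARD('d) - 1. (\<Sum>s\<in>UNIV. cs i s * w s) = 0"
      using coeff_hyper[of w s0] s0 by blast
    have "CARD('d) - 1 \<le> eigmult (sub_adj N) (fund_verts N) \<theta> (lamv N j)"
      using em_F[OF N j(1,2) cs(1)] cs(2) unfolding w_def by blast
    then show ?thesis unfolding cntv_def c0 using \<open>x \<in> Lam N\<close> j(3) by simp
  next
    case False
    then have w0: "w s = 0" for s by blast
    have cis: "cis (- (\<theta>$s)) = (-1)^j" for s
    proof -
      have "(-1)^j * cis (- (\<theta>$s)) = 1" using w0[of s] by (simp add: w_def)
      then have "(-1)^j * ((-1)^j * cis (- (\<theta>$s))) = (-1)^j" by simp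
      then show ?thesis by (simp flip: mult.assoc power_mult_distrib)
    qed
    have cos: "cos (\<theta>$s) = (-1)^j" for s
    proof -
      have "Re (cis (- (\<theta>$s))) = Re ((-1)^j)" using cis[of s] by simp
      then show ?thesis by (simp add: minus_one_power_iff split: if_splits)
    qed
    have hc: "(\<Sum>s\<in>UNIV. cos (\<theta>$s)) = real CARD('d) * (-1)^j" using cos by simp
    obtain cs :: "nat \<Rightarrow> 'd \<Rightarrow> complex" where cs: "cindep CARD('d) cs" using coeff_full by blast
    have "CARD('d) + 1 \<le> eigmult (sub_adj N) (fund_verts N) \<theta> (lamv N j)"
      using em_FG[OF N j(1,2) cs _ hc] w0 unfolding w_def by simp
    moreover have "card {i\<in>{..N}. ndv N \<theta> i = x} \<le> 2"
    proof -
      have "{i\<in>{..N}. ndv N \<theta> i = x} \<subseteq> {j - 1, j}"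
        using ndv_eq_lamv[of _ N j \<theta>] j by force
      then have "card {i\<in>{..N}. ndv N \<theta> i = x} \<le> card {j - 1, j}" by (rule card_mono[rotated]) simp
      also have "\<dots> \<le> 2" by (simp add: card_insert_if)
      finally show ?thesis .
    qed
    ultimately show ?thesis using \<open>x \<in> Lam N\<close> j(3) by (simp add: cntv_def)
  qed
qed

lemma sum_card_fiber:
  assumes "finite I" "finite Y"
  shows "(\<Sum>y\<in>Y. card {i\<in>I. f i = y}) = card {i\<in>I. f i \<in> Y}"
proof -
  have "{i\<in>I. f i \<in> Y} = (\<Union>y\<in>Y. {i\<in>I. f i = y})" by auto
  moreover have "card (\<Union>y\<in>Y. {i\<in>I. f i = y}) = (\<Sum>y\<in>Y. card {i\<in>I. f i = y})"
    by (rule card_UN_disjoint) (use assms in auto)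
  ultimately show ?thesis by simp
qed

lemma sum_eq_pointwise:
  fixes f g :: "'a \<Rightarrow> nat"
  assumes "finite M" "\<forall>y\<in>M. f y \<le> g y" "sum g M \<le> sum f M" "y \<in> M"
  shows "f y = g y"
proof (rule ccontr)
  assume "f y \<noteq> g y"
  then have "f y < g y" using assms(2,4) by force
  then have "sum f M < sum g M" using sum_strict_mono_ex1[OF assms(1,2)] assms(4) by blast
  with assms(3) show False by simp
qed

lemma finite_Vals: "finite (Vals N \<theta>)"
  by (simp add: Vals_def Lam_def)

lemma card_Lam: "card (Lam N) = N"
proof -
  have "inj_on (lamv N) {1..N}"
  proof (rule inj_onI)
    fix x y assume "x \<in> {1..N}" "y \<in> {1..N}" "lamv N x = lamv N y"
    then show "x = y" using lamv_inj[of x N y] by auto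
  qed
  then show ?thesis unfolding Lam_def by (simp add: card_image)
qed

lemma cnt_outside: "x \<notin> Vals N \<theta> \<Longrightarrow> cntv N \<theta> x = 0"
  unfolding cntv_def Vals_def by auto

lemma sum_cnt_total: "(\<Sum>x\<in>Vals N (\<theta>::real^'d::finite). cntv N \<theta> x) = CARD('d) * N + 1"
proof -
  have a: "(\<Sum>x\<in>Vals N \<theta>. card {i\<in>{..N}. ndv N \<theta> i = x}) = N + 1"
  proof -
    have "(\<Sum>x\<in>Vals N \<theta>. card {i\<in>{..N}. ndv N \<theta> i = x}) = card {i\<in>{..N}. ndv N \<theta> i \<in> Vals N \<theta>}"
      by (rule sum_card_fiber) (simp_all add: finite_Vals)
    also have "{i\<in>{..N}. ndv N \<theta> i \<in> Vals N \<theta>} = {..N}" by (auto simp: Vals_def)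
    finally show ?thesis by simp
  qed
  have b: "(\<Sum>x\<in>Vals N \<theta>. (if x \<in> Lam N then CARD('d) - 1 else 0)) = (CARD('d) - 1) * N"
  proof -
    have "(\<Sum>x\<in>Vals N \<theta>. (if x \<in> Lam N then CARD('d) - 1 else 0)) = (\<Sum>x\<in>Vals N \<theta> \<inter> Lam N. CARD('d) - 1)"
      using sum.inter_restrict[OF finite_Vals[of N \<theta>], where B="Lam N" and g="\<lambda>_. CARD('d) - 1"] by (simp add: mult.commute)
    also have "Vals N \<theta> \<inter> Lam N = Lam N" by (auto simp: Vals_def)
    finally show ?thesis by (simp add: card_Lam)
  qed
  have "(\<Sum>x\<in>Vals N \<theta>. cntv N \<theta> x) = N + 1 + (CARD('d) - 1) * N"
    unfolding cntv_def sum.distrib a b ..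
  also have "\<dots> = CARD('d) * N + 1"
  proof -
    have "CARD('d) \<ge> 1" by (simp add: Suc_le_eq)
    then show ?thesis by (simp add: algebra_simps diff_mult_distrib)
  qed
  finally show ?thesis .
qed

lemma em_eq:
  fixes \<theta> :: "real^'d::finite"
  assumes N: "N \<ge> 1"
  shows "eigmult (sub_adj N) (fund_verts N) \<theta> x = cntv N \<theta> x"
proof -
  interpret fibsp "sub_adj N" \<theta> "fund_verts N" by (rule fibsp_sub[OF N])
  let ?M = "insert x (Vals N \<theta>)"
  have fM: "finite ?M" by (simp add: finite_Vals)
  have le: "\<forall>y\<in>?M. cntv N \<theta> y \<le> em y" using cnt_le_em[OF N] by blast
  have "(\<Sum>y\<in>?M. em y) \<le> card (fund_verts N :: ('d \<times> nat) option set)" by (rule em_sum_le[OF fM])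
  also have "\<dots> = (\<Sum>y\<in>Vals N \<theta>. cntv N \<theta> y)" by (simp add: card_fund_verts sum_cnt_total)
  also have "\<dots> = (\<Sum>y\<in>?M. cntv N \<theta> y)"
    by (rule sum.mono_neutral_left) (auto simp: finite_Vals cnt_outside)
  finally have "(\<Sum>y\<in>?M. em y) \<le> (\<Sum>y\<in>?M. cntv N \<theta> y)" .
  then show ?thesis using sum_eq_pointwise[OF fM le] by simp
qed

definition Fc :: "nat \<Rightarrow> real^'d::finite \<Rightarrow> real \<Rightarrow> nat" where
  "Fc N \<theta> lam = card {i\<in>{..N}. ndv N \<theta> i \<le> lam} + (CARD('d) - 1) * card {j\<in>{1..N}. lamv N j \<le> lam}"

lemma cnt_pos:
  assumes d: "CARD('d::finite) \<ge> 2"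
  shows "1 \<le> cntv N (\<theta>::real^'d) x \<longleftrightarrow> x \<in> Vals N \<theta>"
proof
  assume "1 \<le> cntv N \<theta> x" then show "x \<in> Vals N \<theta>" using cnt_outside by fastforce
next
  assume x: "x \<in> Vals N \<theta>"
  show "1 \<le> cntv N \<theta> x"
  proof (cases "x \<in> Lam N")
    case True then show ?thesis using d by (simp add: cntv_def)
  next
    case False
    then obtain i where "i \<le> N" "ndv N \<theta> i = x" using x by (auto simp: Vals_def)
    then have "{i\<in>{..N}. ndv N \<theta> i = x} \<noteq> {}" by auto
    then have "card {i\<in>{..N}. ndv N \<theta> i = x} \<noteq> 0" by simp
    moreover have "cntv N \<theta> x = card {i\<in>{..N}. ndv N \<theta> i = x}" unfolding cntv_def using False by simp
    ultimately show ?thesis by linarith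
  qed
qed

lemma eigcount_eq:
  fixes \<theta> :: "real^'d::finite"
  assumes N: "N \<ge> 1" and d: "CARD('d) \<ge> 2"
  shows "eigcount (sub_adj N) (fund_verts N) \<theta> lam = Fc N \<theta> lam"
proof -
  interpret fibsp "sub_adj N" \<theta> "fund_verts N" by (rule fibsp_sub[OF N])
  let ?Y = "{mu\<in>Vals N \<theta>. mu \<le> lam}"
  have fY: "finite ?Y" by (simp add: finite_Vals)
  have set: "{mu. mu \<le> lam \<and> is_eig (sub_adj N) (fund_verts N) \<theta> mu} = ?Y"
  proof -
    have "is_eig (sub_adj N) (fund_verts N) \<theta> mu \<longleftrightarrow> mu \<in> Vals N \<theta>" for mu
      using is_eig_iff[of mu] em_eq[OF N, of \<theta> mu] cnt_pos[OF d, of N \<theta> mu] by simp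
    then show ?thesis by auto
  qed
  have "eigcount (sub_adj N) (fund_verts N) \<theta> lam = (\<Sum>mu\<in>?Y. cntv N \<theta> mu)"
    unfolding eigcount_def set by (intro sum.cong refl) (rule em_eq[OF N])
  also have "\<dots> = (\<Sum>mu\<in>?Y. card {i\<in>{..N}. ndv N \<theta> i = mu}) + (\<Sum>mu\<in>?Y. if mu \<in> Lam N then CARD('d) - 1 else 0)"
    unfolding cntv_def sum.distrib ..
  also have "(\<Sum>mu\<in>?Y. card {i\<in>{..N}. ndv N \<theta> i = mu}) = card {i\<in>{..N}. ndv N \<theta> i \<in> ?Y}"
    by (rule sum_card_fiber) (simp_all add: fY)
  also have "{i\<in>{..N}. ndv N \<theta> i \<in> ?Y} = {i\<in>{..N}. ndv N \<theta> i \<le> lam}" by (auto simp: Vals_def)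
  also have "(\<Sum>mu\<in>?Y. if mu \<in> Lam N then CARD('d) - 1 else 0) = (CARD('d) - 1) * card (?Y \<inter> Lam N)"
    using sum.inter_restrict[OF fY, where B="Lam N" and g="\<lambda>_. CARD('d) - 1"] by (simp add: mult.commute)
  also have "?Y \<inter> Lam N = lamv N ` {j\<in>{1..N}. lamv N j \<le> lam}" by (auto simp: Vals_def Lam_def)
  also have "card \<dots> = card {j\<in>{1..N}. lamv N j \<le> lam}"
  proof (rule card_image, rule inj_onI)
    fix x y assume "x \<in> {j\<in>{1..N}. lamv N j \<le> lam}" "y \<in> {j\<in>{1..N}. lamv N j \<le> lam}" "lamv N x = lamv N y"
    then show "x = y" using lamv_inj[of x N y] by auto
  qed
  finally show ?thesis unfolding Fc_def .
qed

lemma Fc_mono: "lam \<le> lam' \<Longrightarrow> Fc N \<theta> lam \<le> Fc N \<theta> lam'"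
  unfolding Fc_def by (intro add_mono mult_left_mono card_mono) auto

lemma Fc_ge:
  assumes "{..a} \<subseteq> {i\<in>{..N}. ndv N \<theta> i \<le> lam}" "{1..b} \<subseteq> {j\<in>{1..N}. lamv N j \<le> lam}"
  shows "(a + 1) + (CARD('d) - 1) * b \<le> Fc N (\<theta>::real^'d::finite) lam"
proof -
  have "card {..a} \<le> card {i\<in>{..N}. ndv N \<theta> i \<le> lam}" by (rule card_mono[OF _ assms(1)]) simp
  moreover have "card {1..b} \<le> card {j\<in>{1..N}. lamv N j \<le> lam}" by (rule card_mono[OF _ assms(2)]) simp
  ultimately show ?thesis unfolding Fc_def by (intro add_mono mult_left_mono) auto
qed

lemma Fc_le:
  assumes "{i\<in>{..N}. ndv N \<theta> i \<le> lam} \<subseteq> {..<a}" "{j\<in>{1..N}. lamv N j \<le> lam} \<subseteq> {1..b}"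
  shows "Fc N (\<theta>::real^'d::finite) lam \<le> a + (CARD('d) - 1) * b"
proof -
  have "card {i\<in>{..N}. ndv N \<theta> i \<le> lam} \<le> card {..<a}" by (rule card_mono[OF _ assms(1)]) simp
  moreover have "card {j\<in>{1..N}. lamv N j \<le> lam} \<le> card {1..b}" by (rule card_mono[OF _ assms(2)]) simp
  ultimately show ?thesis unfolding Fc_def by (intro add_mono mult_left_mono) auto
qed

lemma ndv_mono: "i \<le> i' \<Longrightarrow> i' \<le> N \<Longrightarrow> ndv N \<theta> i \<le> ndv N \<theta> i'"
proof (cases "i = i'")
  case False
  assume a: "i \<le> i'" "i' \<le> N"
  then have "ndv N \<theta> i \<le> lamv N (i + 1)" "lamv N (i + 1) \<le> lamv N i'" "lamv N i' \<le> ndv N \<theta> i'"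
    using ndv_bounds[of i N \<theta>] ndv_bounds[of i' N \<theta>] lamv_le[of "i+1" i' N] False by auto
  then show ?thesis by linarith
qed simp

definition seqv :: "nat \<Rightarrow> real^'d::finite \<Rightarrow> nat \<Rightarrow> real" where
  "seqv N \<theta> n = (if (n - 1) mod CARD('d) = 0 then ndv N \<theta> ((n - 1) div CARD('d))
                  else lamv N ((n - 1) div CARD('d) + 1))"

lemma Fc_seqv:
  fixes \<theta> :: "real^'d::finite"
  assumes d: "CARD('d) \<ge> 2" and n: "1 \<le> n" "n \<le> CARD('d) * N + 1"
  shows "n \<le> Fc N \<theta> (seqv N \<theta> n) \<and> (\<forall>lam < seqv N \<theta> n. Fc N \<theta> lam < n)"
proof -
  define D where "D = CARD('d)"
  define q where "q = (n - 1) div D"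
  define r where "r = (n - 1) mod D"
  have D2: "D \<ge> 2" using d by (simp add: D_def)
  have nqr: "n = q * D + r + 1" using n unfolding q_def r_def by simp
  have rD: "r < D" using D2 unfolding r_def by simp
  have qN: "q \<le> N"
  proof -
    have "q * D + r + 1 \<le> N * D + 1" using nqr n(2) by (simp add: D_def mult.commute)
    then have "q * D \<le> N * D" by linarith
    then show ?thesis using D2 by simp
  qed
  have dm: "(D - 1) * x + x = D * x" for x using D2 by (simp add: algebra_simps diff_mult_distrib)
  show ?thesis
  proof (cases "r = 0")
    case True
    have sv: "seqv N \<theta> n = ndv N \<theta> q" unfolding seqv_def using True by (simp add: q_def r_def D_def)
    have A: "n \<le> Fc N \<theta> (seqv N \<theta> n)"
    proof -
      have "{..q} \<subseteq> {i\<in>{..N}. ndv N \<theta> i \<le> ndv N \<theta> q}" using qN ndv_mono[of _ q N \<theta>] by auto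
      moreover have "{1..q} \<subseteq> {j\<in>{1..N}. lamv N j \<le> ndv N \<theta> q}"
        using qN ndv_bounds[of q N \<theta>] lamv_le[of _ q N] by force
      ultimately have "(q + 1) + (D - 1) * q \<le> Fc N \<theta> (seqv N \<theta> n)" unfolding sv D_def by (rule Fc_ge)
      moreover have "(q + 1) + (D - 1) * q = n" using nqr True dm[of q] by (simp add: algebra_simps)
      ultimately show ?thesis by simp
    qed
    have B: "Fc N \<theta> lam < n" if lam: "lam < seqv N \<theta> n" for lam
    proof -
      have "{i\<in>{..N}. ndv N \<theta> i \<le> lam} \<subseteq> {..<q}"
      proof
        fix i assume i: "i \<in> {i\<in>{..N}. ndv N \<theta> i \<le> lam}"
        show "i \<in> {..<q}"
        proof (rule ccontr)
          assume "i \<notin> {..<q}"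
          then have "q \<le> i" by simp
          then have "ndv N \<theta> q \<le> ndv N \<theta> i" using ndv_mono[of q i N \<theta>] i by auto
          then show False using i lam sv by auto
        qed
      qed
      moreover have "{j\<in>{1..N}. lamv N j \<le> lam} \<subseteq> {1..q}"
      proof
        fix j assume j: "j \<in> {j\<in>{1..N}. lamv N j \<le> lam}"
        show "j \<in> {1..q}"
        proof (rule ccontr)
          assume "j \<notin> {1..q}"
          then have "q + 1 \<le> j" using j by auto
          then have "lamv N (q + 1) \<le> lamv N j" using lamv_le[of "q+1" j N] j by auto
          moreover have "ndv N \<theta> q \<le> lamv N (q + 1)" using ndv_bounds[of q N \<theta>] qN by auto
          ultimately show False using j lam sv by auto
        qed
      qed
      ultimately have "Fc N \<theta> lam \<le> q + (D - 1) * q" unfolding D_def by (rule Fc_le)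
      moreover have "q + (D - 1) * q < n" using nqr True dm[of q] by (simp add: algebra_simps)
      ultimately show ?thesis by simp
    qed
    show ?thesis using A B by blast
  next
    case False
    have sv: "seqv N \<theta> n = lamv N (q + 1)" unfolding seqv_def using False by (simp add: q_def r_def D_def)
    have q1N: "q + 1 \<le> N"
    proof -
      have "q * D + r + 1 \<le> N * D + 1" using nqr n(2) by (simp add: D_def mult.commute)
      then have "q * D < N * D" using False by linarith
      then have "q < N" using D2 by simp
      then show ?thesis by simp
    qed
    have A: "n \<le> Fc N \<theta> (seqv N \<theta> n)"
    proof -
      have "{..q} \<subseteq> {i\<in>{..N}. ndv N \<theta> i \<le> lamv N (q + 1)}"
      proof
        fix i assume "i \<in> {..q}"
        then have i: "i \<le> q" by simp
        have "ndv N \<theta> i \<le> lamv N (i + 1)" using ndv_bounds[of i N \<theta>] i q1N by auto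
        also have "\<dots> \<le> lamv N (q + 1)" using lamv_le[of "i+1" "q+1" N] i q1N by auto
        finally show "i \<in> {i\<in>{..N}. ndv N \<theta> i \<le> lamv N (q + 1)}" using i q1N by auto
      qed
      moreover have "{1..q+1} \<subseteq> {j\<in>{1..N}. lamv N j \<le> lamv N (q + 1)}"
        using q1N lamv_le[of _ "q+1" N] by force
      ultimately have "(q + 1) + (D - 1) * (q + 1) \<le> Fc N \<theta> (seqv N \<theta> n)" unfolding sv D_def by (rule Fc_ge)
      moreover have "n \<le> (q + 1) + (D - 1) * (q + 1)" using nqr rD dm[of "q+1"] by (simp add: algebra_simps)
      ultimately show ?thesis by simp
    qed
    have B: "Fc N \<theta> lam < n" if lam: "lam < seqv N \<theta> n" for lam
    proof -
      have "{i\<in>{..N}. ndv N \<theta> i \<le> lam} \<subseteq> {..<q+1}"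
      proof
        fix i assume i: "i \<in> {i\<in>{..N}. ndv N \<theta> i \<le> lam}"
        show "i \<in> {..<q+1}"
        proof (rule ccontr)
          assume "i \<notin> {..<q+1}"
          then have "q + 1 \<le> i" by simp
          then have "lamv N (q + 1) \<le> lamv N i" using lamv_le[of "q+1" i N] i by auto
          moreover have "lamv N i \<le> ndv N \<theta> i" using ndv_bounds[of i N \<theta>] i by auto
          ultimately show False using i lam sv by auto
        qed
      qed
      moreover have "{j\<in>{1..N}. lamv N j \<le> lam} \<subseteq> {1..q}"
      proof
        fix j assume j: "j \<in> {j\<in>{1..N}. lamv N j \<le> lam}"
        show "j \<in> {1..q}"
        proof (rule ccontr)
          assume "j \<notin> {1..q}"
          then have "q + 1 \<le> j" using j by auto
          then have "lamv N (q + 1) \<le> lamv N j" using lamv_le[of "q+1" j N] j by auto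
          then show False using j lam sv by auto
        qed
      qed
      ultimately have "Fc N \<theta> lam \<le> (q + 1) + (D - 1) * q" unfolding D_def by (rule Fc_le)
      moreover have "(q + 1) + (D - 1) * q < n" using nqr False dm[of q] by (simp add: algebra_simps)
      ultimately show ?thesis by simp
    qed
    show ?thesis using A B by blast
  qed
qed

lemma band_eq:
  fixes \<theta> :: "real^'d::finite"
  assumes N: "N \<ge> 1" and d: "CARD('d) \<ge> 2" and n: "1 \<le> n" "n \<le> CARD('d) * N + 1"
  shows "band (sub_adj N) (fund_verts N) n \<theta> = seqv N \<theta> n"
proof -
  have "{lam. n \<le> eigcount (sub_adj N) (fund_verts N) \<theta> lam} = {seqv N \<theta> n..}"
  proof (intro set_eqI iffI)
    fix lam assume "lam \<in> {lam. n \<le> eigcount (sub_adj N) (fund_verts N) \<theta> lam}"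
    then have "n \<le> Fc N \<theta> lam" using eigcount_eq[OF N d] by simp
    then show "lam \<in> {seqv N \<theta> n..}" using Fc_seqv[OF d n, of \<theta>] by (auto simp: not_less[symmetric])
  next
    fix lam assume "lam \<in> {seqv N \<theta> n..}"
    then have "n \<le> Fc N \<theta> lam" using Fc_seqv[OF d n, of \<theta>] Fc_mono[of "seqv N \<theta> n" lam N \<theta>] by auto
    then show "lam \<in> {lam. n \<le> eigcount (sub_adj N) (fund_verts N) \<theta> lam}" using eigcount_eq[OF N d] by simp
  qed
  then show ?thesis unfolding band_def by simp
qed

lemma hyper_null: "{\<theta>::real^'d::finite. \<theta> $ s0 = a} \<in> null_sets lborel"
proof -
  have eq: "{\<theta>::real^'d. \<theta> $ s0 = a} = {x. axis s0 1 \<bullet> x = a}"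
    by (auto simp: cart_eq_inner_axis inner_commute)
  have ax: "axis s0 (1::real) \<noteq> 0" by (metis axis_nth zero_index zero_neq_one)
  have "negligible {x::real^'d. axis s0 1 \<bullet> x = a}" by (rule negligible_hyperplane) (use ax in auto)
  then have "{x::real^'d. axis s0 1 \<bullet> x = a} \<in> null_sets lebesgue" by (simp add: negligible_iff_null_sets)
  moreover have "{x::real^'d. axis s0 1 \<bullet> x = a} \<in> sets lborel"
    using closed_hyperplane[of "axis s0 1" a] by (simp add: borel_closed)
  ultimately show ?thesis unfolding eq using null_sets_completion_iff by blast
qed

lemma special_null: "{\<theta>::real^'d::finite. ccv \<theta> = 1 \<or> ccv \<theta> = -1} \<in> null_sets lborel"
proof -
  obtain s0 :: 'd where True by blast
  let ?Z = "\<Union>k\<in>(UNIV::int set). {\<theta>::real^'d. \<theta> $ s0 = of_int k * pi}"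
  have Z: "?Z \<in> null_sets lborel" by (rule null_sets_UN') (auto intro: hyper_null)
  have sub: "{\<theta>::real^'d. ccv \<theta> = 1 \<or> ccv \<theta> = -1} \<subseteq> ?Z"
  proof
    fix \<theta> :: "real^'d" assume "\<theta> \<in> {\<theta>::real^'d. ccv \<theta> = 1 \<or> ccv \<theta> = -1}"
    then have c: "ccv \<theta> = 1 \<or> ccv \<theta> = -1" by simp
    have "cos (\<theta>$s0) = ccv \<theta>" using allcos[of \<theta> "ccv \<theta>" s0] c ccv_sum[of \<theta>] by simp
    then have "(cos (\<theta>$s0))^2 = 1" using c by auto
    then have "sin (\<theta>$s0) = 0" using sin_cos_squared_add[of "\<theta>$s0"] by simp
    then obtain k :: int where "\<theta>$s0 = of_int k * pi" by (auto simp: sin_zero_iff_int2)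
    then show "\<theta> \<in> ?Z" by auto
  qed
  have "{\<theta>::real^'d. ccv \<theta> = 1 \<or> ccv \<theta> = -1} \<in> sets lborel"
  proof -
    have "continuous_on UNIV (ccv :: real^'d \<Rightarrow> real)"
      unfolding ccv_def by (intro continuous_intros) auto
    then have "ccv \<in> borel_measurable (borel :: (real^'d) measure)" by (rule borel_measurable_continuous_onI)
    then show ?thesis by measurable
  qed
  then show ?thesis using null_sets_subset[OF Z _ sub] by auto
qed

lemma ccv_zero: "ccv (0::real^'d::finite) = 1"
  by (simp add: ccv_def)

lemma ccv_pi: "ccv ((\<chi> s. pi)::real^'d::finite) = -1"
  by (simp add: ccv_def)

lemma ccv_const: "-1 \<le> t \<Longrightarrow> t \<le> 1 \<Longrightarrow> ccv ((\<chi> s. arccos t)::real^'d::finite) = t"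
  by (simp add: ccv_def)

lemma ndc_ends:
  "{ndc N q 1, ndc N q (-1)} = {lamv N q, lamv N (q + 1)}"
  by (cases "even q") (auto simp: ndc_def phic_def lamv_def algebra_simps)

lemma ndc_nonconst: "q \<le> N \<Longrightarrow> ndc N q 1 \<noteq> ndc N q (-1)"
  using ndc_ends[of N q] lamv_less[of q "q+1" N] by (auto simp: doubleton_eq_iff)

lemma range_ndv:
  assumes q: "q \<le> N"
  shows "range (\<lambda>\<theta>::real^'d::finite. ndv N \<theta> q) = {lamv N q..lamv N (q + 1)}"
proof
  show "range (\<lambda>\<theta>::real^'d. ndv N \<theta> q) \<subseteq> {lamv N q..lamv N (q + 1)}"
  proof
    fix x assume "x \<in> range (\<lambda>\<theta>::real^'d. ndv N \<theta> q)"
    then obtain \<theta> :: "real^'d" where "x = ndv N \<theta> q" by auto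
    then show "x \<in> {lamv N q..lamv N (q + 1)}" using ndv_bounds[OF q, of \<theta>] by auto
  qed
next
  show "{lamv N q..lamv N (q + 1)} \<subseteq> range (\<lambda>\<theta>::real^'d. ndv N \<theta> q)"
  proof
    fix x assume x: "x \<in> {lamv N q..lamv N (q + 1)}"
    have q1: "q \<le> N + 1" "q + 1 \<le> N + 1" using q by auto
    have r0: "0 \<le> lamv N q" using lamv_range[OF q1(1)] by simp
    have r2: "lamv N (q + 1) \<le> 2" using lamv_range[OF q1(2)] by simp
    have x02: "-1 \<le> 1 - x" "1 - x \<le> 1" using x r0 r2 by auto
    define \<phi> where "\<phi> = arccos (1 - x)"
    have \<phi>0: "0 \<le> \<phi>" "\<phi> \<le> pi" "cos \<phi> = 1 - x" using arccos[OF x02] by (auto simp: \<phi>_def)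
    have a1: "0 \<le> real q * pi / real (N + 1)" "real q * pi / real (N + 1) \<le> pi" using ang_bounds[OF q1(1)] by auto
    have a2: "0 \<le> real (q + 1) * pi / real (N + 1)" "real (q + 1) * pi / real (N + 1) \<le> pi" using ang_bounds[OF q1(2)] by auto
    have lo: "real q * pi / real (N + 1) \<le> \<phi>"
    proof -
      have "cos \<phi> \<le> cos (real q * pi / real (N + 1))" using \<phi>0(3) x by (simp add: lamv_def)
      then show ?thesis using cos_mono_le_eq[OF \<phi>0(1,2) a1] by simp
    qed
    have hi: "\<phi> \<le> real (q + 1) * pi / real (N + 1)"
    proof -
      have "cos (real (q + 1) * pi / real (N + 1)) \<le> cos \<phi>" using \<phi>0(3) x by (simp add: lamv_def)
      then show ?thesis using cos_mono_le_eq[OF a2 \<phi>0(1,2)] by simp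
    qed
    have lo': "real q * pi \<le> real (N + 1) * \<phi>" using lo by (simp add: divide_le_eq algebra_simps del: of_nat_Suc)
    have hi': "real (N + 1) * \<phi> \<le> real (q + 1) * pi" using hi by (simp add: le_divide_eq algebra_simps del: of_nat_Suc)
    define \<psi> where "\<psi> = (if even q then real (N + 1) * \<phi> - real q * pi else real (q + 1) * pi - real (N + 1) * \<phi>)"
    have \<psi>: "0 \<le> \<psi>" "\<psi> \<le> pi" using lo' hi' by (auto simp: \<psi>_def algebra_simps)
    define \<theta> where "\<theta> = ((\<chi> s. arccos (cos \<psi>))::real^'d)"
    have "ccv \<theta> = cos \<psi>" unfolding \<theta>_def by (rule ccv_const) auto
    moreover have "phic N q (cos \<psi>) = \<phi>"
    proof -
      have "(if even q then real q * pi + \<psi> else real (q + 1) * pi - \<psi>) = real (N + 1) * \<phi>"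
        by (simp add: \<psi>_def)
      then show ?thesis unfolding phic_def arccos_cos[OF \<psi>] by (simp del: of_nat_Suc)
    qed
    ultimately have "phic N q (ccv \<theta>) = \<phi>" by simp
    then have "ndv N \<theta> q = x" using \<phi>0(3) by (simp add: ndv_def ndc_def)
    then show "x \<in> range (\<lambda>\<theta>::real^'d. ndv N \<theta> q)" by (metis rangeI)
  qed
qed

lemma union_intervals: "(\<Union>q\<in>{..N}. {lamv N q..lamv N (q + 1)}) = {0..2}"
proof
  show "(\<Union>q\<in>{..N}. {lamv N q..lamv N (q + 1)}) \<subseteq> {0..2}"
  proof
    fix x assume "x \<in> (\<Union>q\<in>{..N}. {lamv N q..lamv N (q + 1)})"
    then obtain q where q: "q \<le> N" "lamv N q \<le> x" "x \<le> lamv N (q + 1)" by auto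
    then show "x \<in> {0..2}" using lamv_range[of q N] lamv_range[of "q+1" N] by auto
  qed
next
  show "{0..2} \<subseteq> (\<Union>q\<in>{..N}. {lamv N q..lamv N (q + 1)})"
  proof
    fix x :: real assume x: "x \<in> {0..2}"
    define S where "S = {j. j \<le> N \<and> lamv N j \<le> x}"
    have fS: "finite S" "0 \<in> S" using x by (auto simp: S_def)
    define q where "q = Max S"
    have qS: "q \<in> S" using fS unfolding q_def by (intro Max_in) auto
    have hi: "x \<le> lamv N (q + 1)"
    proof (cases "q = N")
      case True then show ?thesis using x lamv_last[of N] by simp
    next
      case False
      then have "q + 1 \<le> N" using qS by (auto simp: S_def)
      moreover have "q + 1 \<notin> S" using Max_ge[OF fS(1), of "q+1"] unfolding q_def[symmetric] by auto
      ultimately show ?thesis by (auto simp: S_def)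
    qed
    show "x \<in> (\<Union>q\<in>{..N}. {lamv N q..lamv N (q + 1)})" using qS hi by (auto simp: S_def)
  qed
qed

lemma band_cases:
  fixes \<theta> :: "real^'d::finite"
  assumes N: "N \<ge> 1" and d: "CARD('d) \<ge> 2" and n: "n \<in> {1..CARD('d) * N + 1}"
  shows "band (sub_adj N) (fund_verts N) n \<theta> =
     (if (n - 1) mod CARD('d) = 0 then ndv N \<theta> ((n - 1) div CARD('d)) else lamv N ((n - 1) div CARD('d) + 1))"
  using band_eq[OF N d, of n \<theta>] n by (simp add: seqv_def)

lemma idx_bounds:
  assumes d: "CARD('d::finite) \<ge> 2" and n: "n \<in> {1..CARD('d) * N + 1}"
  shows "(n - 1) div CARD('d) \<le> N \<and> ((n - 1) mod CARD('d) \<noteq> 0 \<longrightarrow> (n - 1) div CARD('d) + 1 \<le> N)"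
proof -
  define D where "D = CARD('d)"
  define q where "q = (n - 1) div D"
  define r where "r = (n - 1) mod D"
  have D2: "D \<ge> 2" using d by (simp add: D_def)
  have nqr: "n - 1 = q * D + r" unfolding q_def r_def by simp
  have "n \<le> N * D + 1" using n by (simp add: D_def mult.commute)
  then have le: "q * D + r \<le> N * D" using nqr by linarith
  have "q * D \<le> N * D" using le by linarith
  then have "q \<le> N" using D2 by simp
  moreover have "r \<noteq> 0 \<longrightarrow> q + 1 \<le> N"
  proof
    assume "r \<noteq> 0"
    then have "q * D < N * D" using le by linarith
    then show "q + 1 \<le> N" using D2 by simp
  qed
  ultimately show ?thesis by (simp add: q_def r_def D_def)
qed

lemma deg_iff:
  assumes N: "N \<ge> 1" and d: "CARD('d::finite) \<ge> 2" and n: "n \<in> {1..CARD('d) * N + 1}"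
  shows "degenerate_band (sub_adj N :: 'd sv \<Rightarrow> 'd sv \<Rightarrow> bool) (fund_verts N) n \<longleftrightarrow> (n - 1) mod CARD('d) \<noteq> 0"
proof
  assume dg: "degenerate_band (sub_adj N :: 'd sv \<Rightarrow> 'd sv \<Rightarrow> bool) (fund_verts N) n"
  show "(n - 1) mod CARD('d) \<noteq> 0"
  proof
    assume m: "(n - 1) mod CARD('d) = 0"
    define q where "q = (n - 1) div CARD('d)"
    have q: "q \<le> N" using idx_bounds[OF d n] by (simp add: q_def)
    obtain lam where "\<forall>\<theta>. band (sub_adj N :: 'd sv \<Rightarrow> 'd sv \<Rightarrow> bool) (fund_verts N) n \<theta> = lam"
      using dg unfolding degenerate_band_def by blast
    then have "band (sub_adj N :: 'd sv \<Rightarrow> 'd sv \<Rightarrow> bool) (fund_verts N) n (0::real^'d) =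
               band (sub_adj N :: 'd sv \<Rightarrow> 'd sv \<Rightarrow> bool) (fund_verts N) n ((\<chi> s. pi)::real^'d)" by simp
    then have "ndc N q 1 = ndc N q (-1)"
      using band_cases[OF N d n, of "0::real^'d"] band_cases[OF N d n, of "(\<chi> s. pi)::real^'d"] m
      by (simp add: ndv_def ccv_zero ccv_pi q_def)
    with ndc_nonconst[OF q] show False by simp
  qed
next
  assume m: "(n - 1) mod CARD('d) \<noteq> 0"
  show "degenerate_band (sub_adj N :: 'd sv \<Rightarrow> 'd sv \<Rightarrow> bool) (fund_verts N) n"
    unfolding degenerate_band_def using band_cases[OF N d n] m by auto
qed

lemma lam_set: "{1 + cos (pi * real n / real (N + 1)) | n. n \<in> {1..N}} = lamv N ` {1..N}"
proof -
  have e: "1 + cos (pi * real n / real (N + 1)) = lamv N (N + 1 - n)" if "n \<in> {1..N}" for n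
  proof -
    have "real (N + 1 - n) * pi / real (N + 1) = pi - pi * real n / real (N + 1)"
      using that by (simp add: of_nat_diff field_simps del: of_nat_Suc)
    then show ?thesis by (simp add: lamv_def)
  qed
  show ?thesis
  proof (intro set_eqI iffI)
    fix x assume "x \<in> {1 + cos (pi * real n / real (N + 1)) | n. n \<in> {1..N}}"
    then obtain n where "n \<in> {1..N}" "x = 1 + cos (pi * real n / real (N + 1))" by auto
    then show "x \<in> lamv N ` {1..N}" using e by force
  next
    fix x assume "x \<in> lamv N ` {1..N}"
    then obtain j where j: "j \<in> {1..N}" "x = lamv N j" by auto
    then have "N + 1 - j \<in> {1..N}" "N + 1 - (N + 1 - j) = j" by auto
    then show "x \<in> {1 + cos (pi * real n / real (N + 1)) | n. n \<in> {1..N}}"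
      using e[of "N + 1 - j"] j by force
  qed
qed

theorem proposition6p2:
  fixes N :: nat
  assumes "CARD('d::finite) \<ge> 2" and "N \<ge> 1"
  defines "A \<equiv> (sub_adj N :: 'd sv \<Rightarrow> 'd sv \<Rightarrow> bool)"
      and "Vs \<equiv> (fund_verts N :: ('d \<times> nat) option set)"
  shows "card Vs = CARD('d) * N + 1
     \<and> spec A Vs = spec_ac A Vs \<union> spec_fb A Vs
     \<and> spec_ac A Vs = {0..2}
     \<and> spec_fb A Vs = {1 + cos (pi * real n / real (N + 1)) | n. n \<in> {1..N}}
     \<and> (\<forall>lam\<in>spec_fb A Vs. (AE \<theta> in lborel. eigmult A Vs \<theta> lam = CARD('d) - 1))
     \<and> spec_fb A Vs \<subseteq> spec_ac A Vs"
proof -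
  note d = assms(1) and N = assms(2)
  have cV: "card Vs = CARD('d) * N + 1" unfolding Vs_def by (rule card_fund_verts)
  have spec_un: "spec A Vs = spec_ac A Vs \<union> spec_fb A Vs"
  proof (intro set_eqI iffI)
    fix x assume "x \<in> spec A Vs"
    then obtain n \<theta> where n: "n \<in> {1..card Vs}" "x = band A Vs n \<theta>" unfolding spec_def by auto
    show "x \<in> spec_ac A Vs \<union> spec_fb A Vs"
    proof (cases "degenerate_band A Vs n")
      case True
      then obtain lam where "\<forall>\<theta>. band A Vs n \<theta> = lam" unfolding degenerate_band_def by blast
      then show ?thesis using n unfolding spec_fb_def by auto
    next
      case False
      then show ?thesis using n unfolding spec_ac_def by auto
    qed
  next
    fix x assume "x \<in> spec_ac A Vs \<union> spec_fb A Vs"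
    then show "x \<in> spec A Vs" unfolding spec_def spec_ac_def spec_fb_def by (auto intro!: rangeI)
  qed
  have ac: "spec_ac A Vs = {0..2}"
  proof (intro set_eqI iffI)
    fix x assume "x \<in> spec_ac A Vs"
    then obtain n \<theta> where n: "n \<in> {1..CARD('d) * N + 1}" "\<not> degenerate_band A Vs n" "x = band A Vs n \<theta>"
      unfolding spec_ac_def cV by auto
    have m: "(n - 1) mod CARD('d) = 0" using n(2) deg_iff[OF N d n(1)] unfolding A_def Vs_def by simp
    have q: "(n - 1) div CARD('d) \<le> N" using idx_bounds[OF d n(1)] by simp
    have "x = ndv N \<theta> ((n - 1) div CARD('d))"
      using n(3) band_cases[OF N d n(1), of \<theta>] m unfolding A_def Vs_def by simp
    then have "x \<in> (\<Union>q\<in>{..N}. {lamv N q..lamv N (q + 1)})" using ndv_bounds[OF q, of \<theta>] q by auto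
    then show "x \<in> {0..2}" using union_intervals by blast
  next
    fix x :: real assume x02: "x \<in> {0..2}"
    have "x \<in> (\<Union>q\<in>{..N}. {lamv N q..lamv N (q + 1)})" using union_intervals[of N] x02 by blast
    then obtain q where q: "q \<le> N" "x \<in> {lamv N q..lamv N (q + 1)}" by auto
    then obtain \<theta> :: "real^'d" where th: "ndv N \<theta> q = x" using range_ndv[OF q(1), where 'd='d] by (metis imageE)
    define n where "n = q * CARD('d) + 1"
    have n1: "n - 1 = q * CARD('d)" by (simp add: n_def)
    have nr: "n \<in> {1..CARD('d) * N + 1}" using q(1) by (simp add: n_def mult.commute)
    have m: "(n - 1) mod CARD('d) = 0" "(n - 1) div CARD('d) = q" unfolding n1 by simp_all
    have "\<not> degenerate_band A Vs n" using deg_iff[OF N d nr] m unfolding A_def Vs_def by simp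
    moreover have "band A Vs n \<theta> = x" using band_cases[OF N d nr, of \<theta>] m th unfolding A_def Vs_def by simp
    ultimately show "x \<in> spec_ac A Vs" unfolding spec_ac_def cV using nr by (auto intro!: rangeI exI)
  qed
  have fb: "spec_fb A Vs = lamv N ` {1..N}"
  proof (intro set_eqI iffI)
    fix lam assume "lam \<in> spec_fb A Vs"
    then obtain n where n: "n \<in> {1..CARD('d) * N + 1}" "\<forall>\<theta>. band A Vs n \<theta> = lam"
      unfolding spec_fb_def cV by auto
    then have "degenerate_band A Vs n" unfolding degenerate_band_def by blast
    then have m: "(n - 1) mod CARD('d) \<noteq> 0" using deg_iff[OF N d n(1)] unfolding A_def Vs_def by simp
    have j: "(n - 1) div CARD('d) + 1 \<in> {1..N}" using idx_bounds[OF d n(1)] m by simp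
    have "lam = lamv N ((n - 1) div CARD('d) + 1)"
      using n(2) band_cases[OF N d n(1), of "0::real^'d"] m unfolding A_def Vs_def by simp
    then show "lam \<in> lamv N ` {1..N}" using j by blast
  next
    fix lam assume "lam \<in> lamv N ` {1..N}"
    then obtain j where j: "j \<in> {1..N}" "lam = lamv N j" by auto
    define n where "n = (j - 1) * CARD('d) + 2"
    have n1: "n - 1 = 1 + (j - 1) * CARD('d)" by (simp add: n_def)
    have nr: "n \<in> {1..CARD('d) * N + 1}"
    proof -
      have "j - 1 \<le> N - 1" using j by auto
      then have a: "(j - 1) * CARD('d) \<le> (N - 1) * CARD('d)" by (rule mult_right_mono) simp
      have b: "(N - 1) * CARD('d) + 2 \<le> CARD('d) * N + 1"
        using N d by (cases N) (auto simp: algebra_simps)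
      have "n \<le> CARD('d) * N + 1" unfolding n_def using a b by linarith
      then show ?thesis by (simp add: n_def)
    qed
    have m: "(n - 1) mod CARD('d) = 1" "(n - 1) div CARD('d) = j - 1"
      unfolding n1 using d by (simp_all only: mod_mult_self1 div_mult_self1) simp_all
    have "\<forall>\<theta>. band A Vs n \<theta> = lam" using band_cases[OF N d nr] m j unfolding A_def Vs_def by simp
    then show "lam \<in> spec_fb A Vs" unfolding spec_fb_def cV using nr by blast
  qed
  have ae: "\<forall>lam\<in>spec_fb A Vs. (AE \<theta> in lborel. eigmult A Vs \<theta> lam = CARD('d) - 1)"
  proof
    fix lam assume "lam \<in> spec_fb A Vs"
    then obtain j where j: "j \<in> {1..N}" "lam = lamv N j" unfolding fb by auto
    show "AE \<theta> in lborel. eigmult A Vs \<theta> lam = CARD('d) - 1"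
    proof (rule AE_I'[OF special_null])
      show "{\<theta> \<in> space lborel. eigmult A Vs \<theta> lam \<noteq> CARD('d) - 1} \<subseteq> {\<theta>::real^'d. ccv \<theta> = 1 \<or> ccv \<theta> = -1}"
      proof
        fix \<theta> :: "real^'d" assume th: "\<theta> \<in> {\<theta> \<in> space lborel. eigmult A Vs \<theta> lam \<noteq> CARD('d) - 1}"
        have "eigmult A Vs \<theta> lam = cntv N \<theta> (lamv N j)" unfolding A_def Vs_def j(2) by (rule em_eq[OF N])
        moreover have "lamv N j \<in> Lam N" using j(1) by (simp add: Lam_def)
        ultimately have em: "eigmult A Vs \<theta> lam = card {i\<in>{..N}. ndv N \<theta> i = lamv N j} + (CARD('d) - 1)"
          unfolding cntv_def j(2) by simp
        have "card {i\<in>{..N}. ndv N \<theta> i = lamv N j} \<noteq> 0"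
        proof
          assume c0: "card {i\<in>{..N}. ndv N \<theta> i = lamv N j} = 0"
          have "eigmult A Vs \<theta> lam = CARD('d) - 1" unfolding em c0 by simp
          with th show False by simp
        qed
        then obtain i where "i \<le> N" "ndv N \<theta> i = lamv N j" by (metis (mono_tags, lifting) Collect_empty_eq atMost_iff card.empty)
        then have "ccv \<theta> = (-1)^j" using ndv_eq_lamv[of i N j \<theta>] j by auto
        then show "\<theta> \<in> {\<theta>::real^'d. ccv \<theta> = 1 \<or> ccv \<theta> = -1}" by (auto simp: minus_one_power_iff)
      qed
    qed
  qed
  have sub: "spec_fb A Vs \<subseteq> spec_ac A Vs"
    unfolding fb ac using lamv_range by fastforce
  show ?thesis using cV spec_un ac fb ae sub lam_set[of N] by simp
qed

end
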